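(* Let $C\subseteq\{0,1\}^n$ be the $d$-maximum class of a simple linear arrangement $A$ of $n$ hyperplanes in $\mathbb{R}^d$, and consider the corner-peeling of all of $C$ obtained by sweeping: a generic hyperplane is swept across $A$, peeling each concept when it crosses the last $d$-intersection point in the closure of its cell, after which the remaining class corresponds to the simple arrangement induced on the sweeping hyperplane in $\mathbb{R}^{d-1}$, which is swept in the same way, and so on. Then the sequence of cubes $C'_0,C'_1,\dots$ removed in this corner-peeling has non-increasing dimension; in fact there are $\binom{n}{d}$ cubes of dimension $d$, then $\binom{n}{d-1}$ cubes of dimension $d-1$, and so on.
   Context: A simple linear arrangement is a collection of $n\ge d$ oriented affine hyperplanes in $\mathbb{R}^d$ in general position (any $k<d$ meet in a $(d-k)$-plane, any $d$ meet in a single point called a $d$-intersection point, any $d+1$ have empty intersection); each complementary cell gives the concept in $\{0,1\}^n$ recording on which side of each hyperplane it lies, and $C$ is the set of these concepts; it is $d$-maximum ($|C|=\sum_{i=0}^d\binom{n}{i}$). A generic hyperplane $h$ is one with $A\cup\{h\}$ in general position; it starts with all $d$-intersection points in its positive half-space. A $k$-cube in $C$ is a set of $2^k$ points of $C$ agreeing outside some $k$ coordinates and taking all values on them. In a corner-peeling ordering $v_1,v_2,\dots$ with $C_0=C$, $C_t=C_{t-1}\setminus\{v_t\}$, $C'_{t-1}$ denotes the unique cube of maximum dimension among cubes of $C_{t-1}$ containing $v_t$ (which contains all neighbours of $v_t$ in the one-inclusion graph of $C_{t-1}$). *)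

theory Defs
  imports "HOL-Analysis.Analysis"
begin

definition hyp :: "(nat \<Rightarrow> 'a::euclidean_space) \<Rightarrow> (nat \<Rightarrow> real) \<Rightarrow> nat \<Rightarrow> 'a set" where
  "hyp w b i = {x. w i \<bullet> x = b i}"

definition simple_in :: "nat \<Rightarrow> (nat \<Rightarrow> 'a::euclidean_space) \<Rightarrow> (nat \<Rightarrow> real) \<Rightarrow> 'a set \<Rightarrow> nat \<Rightarrow> bool" where
  "simple_in n w b F m \<longleftrightarrow>
     (\<forall>S. S \<subseteq> {..<n} \<longrightarrow>
        (card S \<le> m \<longrightarrow> aff_dim (F \<inter> \<Inter>(hyp w b ` S)) = int m - int (card S)) \<and>
        (card S = Suc m \<longrightarrow> F \<inter> \<Inter>(hyp w b ` S) = {}))"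

text \<open>Concepts are encoded as subsets of {..<n} (the set of coordinates equal to 1).\<close>

definition cells :: "nat \<Rightarrow> (nat \<Rightarrow> 'a::euclidean_space) \<Rightarrow> (nat \<Rightarrow> real) \<Rightarrow> 'a set \<Rightarrow> 'a set set" where
  "cells n w b F = components (F - (\<Union>i<n. hyp w b i))"

definition cell_concept :: "nat \<Rightarrow> (nat \<Rightarrow> 'a::euclidean_space) \<Rightarrow> (nat \<Rightarrow> real) \<Rightarrow> 'a set \<Rightarrow> nat set" where
  "cell_concept n w b K = {i. i < n \<and> (\<exists>x\<in>K. b i < w i \<bullet> x)}"

definition concept_class :: "nat \<Rightarrow> (nat \<Rightarrow> 'a::euclidean_space) \<Rightarrow> (nat \<Rightarrow> real) \<Rightarrow> nat set set" where
  "concept_class n w b = cell_concept n w b ` cells n w b UNIV"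

definition verts :: "nat \<Rightarrow> (nat \<Rightarrow> 'a::euclidean_space) \<Rightarrow> (nat \<Rightarrow> real) \<Rightarrow> 'a set \<Rightarrow> nat \<Rightarrow> 'a set" where
  "verts n w b F m = {v \<in> F. \<exists>S. S \<subseteq> {..<n} \<and> card S = m \<and> v \<in> \<Inter>(hyp w b ` S)}"

text \<open>Sweep data: at level k the sweeping hyperplane inside the flat F_k is
  {x \<in> F_k. a k \<bullet> x = \<sigma>}, with positive side a k \<bullet> x > \<sigma>; it is translated
  (\<sigma> increasing) from a position with all intersection points of level k on its
  positive side to its final position \<sigma> = s k, beyond all of them.\<close>

primrec flat :: "(nat \<Rightarrow> 'a::euclidean_space) \<Rightarrow> (nat \<Rightarrow> real) \<Rightarrow> nat \<Rightarrow> 'a set" where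
  "flat a s 0 = UNIV"
| "flat a s (Suc k) = flat a s k \<inter> {x. a k \<bullet> x = s k}"

text \<open>Genericity of the sweep: the sweeping hyperplane crosses the intersection
  points one at a time, ends beyond all of them, and (equivalently, general
  position with the arrangement at non-critical times) the arrangement induced on
  the final sweeping hyperplane is again simple.\<close>

definition sweep_ok :: "nat \<Rightarrow> nat \<Rightarrow> (nat \<Rightarrow> 'a::euclidean_space) \<Rightarrow> (nat \<Rightarrow> real)
    \<Rightarrow> (nat \<Rightarrow> 'a) \<Rightarrow> (nat \<Rightarrow> real) \<Rightarrow> bool" where
  "sweep_ok n d w b a s \<longleftrightarrow>
     (\<forall>k<d. (\<forall>v\<in>verts n w b (flat a s k) (d - k). a k \<bullet> v < s k)
          \<and> inj_on (\<lambda>v. a k \<bullet> v) (verts n w b (flat a s k) (d - k))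
          \<and> simple_in n w b (flat a s (Suc k)) (d - Suc k))"

text \<open>Concept c is peeled at level k (k \<le> d) at time t: it is the concept of a
  cell K of the arrangement induced on F_k; for k < d the cell is not met by the
  final sweeping hyperplane (so it does not survive to the next level) and t is
  the sweep parameter of the last intersection point in the closure of K; at
  level d (F_d is a point) the single remaining concept is peeled.\<close>

definition peeled_at :: "nat \<Rightarrow> nat \<Rightarrow> (nat \<Rightarrow> 'a::euclidean_space) \<Rightarrow> (nat \<Rightarrow> real)
    \<Rightarrow> (nat \<Rightarrow> 'a) \<Rightarrow> (nat \<Rightarrow> real) \<Rightarrow> nat \<Rightarrow> real \<Rightarrow> nat set \<Rightarrow> bool" where
  "peeled_at n d w b a s k t c \<longleftrightarrow>
     k \<le> d \<and> (\<exists>K\<in>cells n w b (flat a s k). cell_concept n w b K = c \<and>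
        (if k < d then K \<inter> flat a s (Suc k) = {} \<and>
              t = Max ((\<lambda>v. a k \<bullet> v) ` (verts n w b (flat a s k) (d - k) \<inter> closure K))
         else t = 0))"

definition sweep_order :: "nat \<Rightarrow> nat \<Rightarrow> (nat \<Rightarrow> 'a::euclidean_space) \<Rightarrow> (nat \<Rightarrow> real)
    \<Rightarrow> (nat \<Rightarrow> 'a) \<Rightarrow> (nat \<Rightarrow> real) \<Rightarrow> nat set list \<Rightarrow> bool" where
  "sweep_order n d w b a s vs \<longleftrightarrow>
     distinct vs \<and> set vs = concept_class n w b \<and>
     (\<forall>i j. i < j \<and> j < length vs \<longrightarrow>
        (\<exists>k t k' t'. peeled_at n d w b a s k t (vs ! i) \<and> peeled_at n d w b a s k' t' (vs ! j)
                      \<and> (k < k' \<or> (k = k' \<and> t \<le> t'))))"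

definition is_cube :: "nat \<Rightarrow> nat set set \<Rightarrow> nat set set \<Rightarrow> nat \<Rightarrow> bool" where
  "is_cube n D Q k \<longleftrightarrow>
     (\<exists>K B. K \<subseteq> {..<n} \<and> card K = k \<and> B \<subseteq> {..<n} - K \<and>
            Q = (\<lambda>T. B \<union> T) ` Pow K \<and> Q \<subseteq> D)"

text \<open>Dimension of the (unique) maximum-dimensional cube of D containing v,
  i.e. dim C'_(t-1) for D = C_(t-1), v = v_t.\<close>

definition max_cube_dim :: "nat \<Rightarrow> nat set set \<Rightarrow> nat set \<Rightarrow> nat" where
  "max_cube_dim n D v = Max {k. \<exists>Q. is_cube n D Q k \<and> v \<in> Q}"

end

theory Submission
  imports Defs
begin


definition sg :: "nat set \<Rightarrow> nat \<Rightarrow> real" where "sg c i = (if i \<in> c then 1 else -1)"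

definition RR :: "nat \<Rightarrow> (nat \<Rightarrow> 'a::euclidean_space) \<Rightarrow> (nat \<Rightarrow> real) \<Rightarrow> 'a set \<Rightarrow> nat set \<Rightarrow> 'a set" where
  "RR n w b F c = {x\<in>F. \<forall>i<n. 0 < sg c i * (w i \<bullet> x - b i)}"
definition WW :: "nat \<Rightarrow> (nat \<Rightarrow> 'a::euclidean_space) \<Rightarrow> (nat \<Rightarrow> real) \<Rightarrow> 'a set \<Rightarrow> nat set \<Rightarrow> 'a set" where
  "WW n w b F c = {x\<in>F. \<forall>i<n. 0 \<le> sg c i * (w i \<bullet> x - b i)}"
definition Cl :: "nat \<Rightarrow> (nat \<Rightarrow> 'a::euclidean_space) \<Rightarrow> (nat \<Rightarrow> real) \<Rightarrow> 'a set \<Rightarrow> nat set set" where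
  "Cl n w b F = {c. c \<subseteq> {..<n} \<and> RR n w b F c \<noteq> {}}"
definition dirs :: "'a::euclidean_space set \<Rightarrow> 'a set" where
  "dirs F = {u. \<forall>x\<in>F. \<forall>t::real. x + t *\<^sub>R u \<in> F}"

lemma sg_sq[simp]: "sg c i * sg c i = 1" by (simp add: sg_def)
lemma sg_ne0[simp]: "sg c i \<noteq> 0" by (simp add: sg_def)
lemma sg_cases: "sg c i = 1 \<or> sg c i = -1" by (simp add: sg_def)

lemma RR_sub_WW: "RR n w b F c \<subseteq> WW n w b F c"
  unfolding RR_def WW_def by (auto intro: less_imp_le)

lemma convex_RR:
  assumes "affine F" shows "convex (RR n w b F c)"
  unfolding convex_def
proof (intro ballI allI impI)
  fix x y and u v :: real
  assume x: "x \<in> RR n w b F c" and y: "y \<in> RR n w b F c" and uv: "0 \<le> u" "0 \<le> v" "u + v = 1"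
  have "u *\<^sub>R x + v *\<^sub>R y \<in> F" using x y uv assms unfolding RR_def affine_def by auto
  moreover have "0 < sg c i * (w i \<bullet> (u *\<^sub>R x + v *\<^sub>R y) - b i)" if i: "i < n" for i
  proof -
    have a: "0 < sg c i * (w i \<bullet> x - b i)" "0 < sg c i * (w i \<bullet> y - b i)"
      using x y i unfolding RR_def by auto
    have "sg c i * (w i \<bullet> (u *\<^sub>R x + v *\<^sub>R y) - b i)
       = u * (sg c i * (w i \<bullet> x - b i)) + v * (sg c i * (w i \<bullet> y - b i))"
      using uv(3) apply (simp add: inner_add_right algebra_simps)
      by (metis distrib_right mult_1)
    also have "\<dots> > 0" using a uv
      by (smt (verit, best) mult_nonneg_nonneg mult_pos_pos)
    finally show ?thesis .
  qed
  ultimately show "u *\<^sub>R x + v *\<^sub>R y \<in> RR n w b F c" unfolding RR_def by auto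
qed

definition sig :: "nat \<Rightarrow> (nat \<Rightarrow> 'a::euclidean_space) \<Rightarrow> (nat \<Rightarrow> real) \<Rightarrow> 'a \<Rightarrow> nat set" where
  "sig n w b x = {i. i < n \<and> b i < w i \<bullet> x}"

lemma in_RR_sig:
  assumes "x \<in> F - (\<Union>i<n. hyp w b i)" shows "x \<in> RR n w b F (sig n w b x)"
proof -
  have "0 < sg (sig n w b x) i * (w i \<bullet> x - b i)" if i: "i < n" for i
  proof -
    have "w i \<bullet> x \<noteq> b i" using assms i unfolding hyp_def by auto
    then show ?thesis unfolding sig_def sg_def using i by auto
  qed
  then show ?thesis using assms unfolding RR_def by auto
qed

lemma RR_sig_eq:
  assumes "x \<in> RR n w b F c" "c \<subseteq> {..<n}" shows "sig n w b x = c"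
  using assms unfolding RR_def sig_def sg_def
  by (auto split: if_splits)

lemma RR_in_compl: "RR n w b F c \<subseteq> F - (\<Union>i<n. hyp w b i)"
  unfolding RR_def hyp_def by auto

lemma comp_eq:
  assumes "affine F" and x: "x \<in> F - (\<Union>i<n. hyp w b i)"
  shows "connected_component_set (F - (\<Union>i<n. hyp w b i)) x = RR n w b F (sig n w b x)"
proof
  let ?S = "F - (\<Union>i<n. hyp w b i)"
  show "RR n w b F (sig n w b x) \<subseteq> connected_component_set ?S x"
    by (rule connected_component_maximal[OF in_RR_sig[OF x] convex_connected[OF convex_RR[OF assms(1)]] RR_in_compl])
  show "connected_component_set ?S x \<subseteq> RR n w b F (sig n w b x)"
  proof
    fix y assume y: "y \<in> connected_component_set ?S x"
    let ?C = "connected_component_set ?S x"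
    have conn: "connected ?C" by simp
    have sub: "?C \<subseteq> ?S" by (rule connected_component_subset)
    have xC: "x \<in> ?C" using x by simp
    have yS: "y \<in> ?S" using y sub by auto
    have "0 < sg (sig n w b x) i * (w i \<bullet> y - b i)" if i: "i < n" for i
    proof -
      have nz: "w i \<bullet> z \<noteq> b i" if "z \<in> ?C" for z using that sub i unfolding hyp_def by auto
      have "\<not> (w i \<bullet> x < b i \<and> b i < w i \<bullet> y)"
        using connected_ivt_hyperplane[OF conn xC y, of "w i" "b i"] nz by force
      moreover have "\<not> (w i \<bullet> y < b i \<and> b i < w i \<bullet> x)"
        using connected_ivt_hyperplane[OF conn y xC, of "w i" "b i"] nz by force
      moreover have "w i \<bullet> x \<noteq> b i" "w i \<bullet> y \<noteq> b i" using nz xC y by auto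
      ultimately show ?thesis using i unfolding sig_def sg_def by auto
    qed
    then show "y \<in> RR n w b F (sig n w b x)" using yS unfolding RR_def by auto
  qed
qed

lemma cells_eq:
  assumes "affine F"
  shows "cells n w b F = (RR n w b F) ` Cl n w b F"
proof -
  let ?S = "F - (\<Union>i<n. hyp w b i)"
  have "cells n w b F = (\<lambda>x. RR n w b F (sig n w b x)) ` ?S"
    unfolding cells_def components_def using comp_eq[OF assms] by auto
  also have "\<dots> = (RR n w b F) ` Cl n w b F"
  proof
    show "(\<lambda>x. RR n w b F (sig n w b x)) ` ?S \<subseteq> RR n w b F ` Cl n w b F"
    proof
      fix K assume "K \<in> (\<lambda>x. RR n w b F (sig n w b x)) ` ?S"
      then obtain x where x: "x \<in> ?S" "K = RR n w b F (sig n w b x)" by auto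
      have "sig n w b x \<in> Cl n w b F" using in_RR_sig[OF x(1)] unfolding Cl_def sig_def by auto
      then show "K \<in> RR n w b F ` Cl n w b F" using x by auto
    qed
    show "RR n w b F ` Cl n w b F \<subseteq> (\<lambda>x. RR n w b F (sig n w b x)) ` ?S"
    proof
      fix K assume "K \<in> RR n w b F ` Cl n w b F"
      then obtain c where c: "c \<in> Cl n w b F" "K = RR n w b F c" by auto
      then obtain x where x: "x \<in> RR n w b F c" unfolding Cl_def by auto
      have "sig n w b x = c" using RR_sig_eq[OF x] c unfolding Cl_def by auto
      then show "K \<in> (\<lambda>x. RR n w b F (sig n w b x)) ` ?S" using x c RR_in_compl by force
    qed
  qed
  finally show ?thesis .
qed

lemma cell_concept_RR:
  assumes "c \<in> Cl n w b F" shows "cell_concept n w b (RR n w b F c) = c"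
proof -
  obtain x where x: "x \<in> RR n w b F c" using assms unfolding Cl_def by auto
  have sub: "c \<subseteq> {..<n}" using assms unfolding Cl_def by auto
  show ?thesis unfolding cell_concept_def
  proof safe
    fix i y assume i: "i < n" "y \<in> RR n w b F c" "b i < w i \<bullet> y"
    show "i \<in> c"
    proof (rule ccontr)
      assume "i \<notin> c" then show False using i unfolding RR_def sg_def by force
    qed
  next
    fix i assume "i \<in> c" then show "i < n" using sub by auto
  next
    fix i assume i: "i \<in> c" then show "\<exists>x\<in>RR n w b F c. b i < w i \<bullet> x"
      using x sub unfolding RR_def sg_def by (intro bexI[of _ x]) auto
  qed
qed

lemma concept_class_eq: "concept_class n w b = Cl n w b UNIV"
proof -
  have "concept_class n w b = cell_concept n w b ` RR n w b UNIV ` Cl n w b UNIV"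
    unfolding concept_class_def cells_eq[OF affine_UNIV] by simp
  also have "\<dots> = Cl n w b UNIV" using cell_concept_RR by (force simp: image_image)
  finally show ?thesis .
qed




definition NN :: "nat \<Rightarrow> nat \<Rightarrow> nat" where "NN n m = (\<Sum>i\<le>m. n choose i)"
lemma NN_0[simp]: "NN n 0 = 1" by (simp add: NN_def)
lemma NN_n0: "NN 0 m = 1" by (induction m) (auto simp: NN_def)
lemma NN_Suc: "NN (Suc n) (Suc m) = NN n (Suc m) + NN n m"
  by (induction m) (auto simp: NN_def)

lemma affine_hyp: "affine (hyp w b i)" unfolding hyp_def by (rule affine_hyperplane)

lemma affine_Int_hyps: "affine F \<Longrightarrow> affine (F \<inter> \<Inter>(hyp w b ` S))"
  by (intro affine_Int affine_Inter) (auto simp: affine_hyp)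

lemma affine_flat: "affine (flat a s k)"
  by (induction k) (auto intro!: affine_Int affine_hyperplane simp: affine_UNIV)

lemma dirsI: "affine F \<Longrightarrow> p \<in> F \<Longrightarrow> q \<in> F \<Longrightarrow> q - p \<in> dirs F"
  unfolding dirs_def using mem_affine_3_minus by blast

lemma dirs_mono_lemma: "u \<in> dirs F \<Longrightarrow> x \<in> F \<Longrightarrow> x + t *\<^sub>R u \<in> F"
  unfolding dirs_def by auto

lemma subspace_dirs: "subspace (dirs F)"
proof -
  have "0 \<in> dirs F" unfolding dirs_def by simp
  moreover have "x + y \<in> dirs F" if "x \<in> dirs F" "y \<in> dirs F" for x y
    unfolding dirs_def
  proof safe
    fix z t assume "z \<in> F"
    then have "(z + t *\<^sub>R x) + t *\<^sub>R y \<in> F" using that unfolding dirs_def by blast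
    then show "z + t *\<^sub>R (x + y) \<in> F" by (simp add: algebra_simps)
  qed
  moreover have "c *\<^sub>R x \<in> dirs F" if "x \<in> dirs F" for c x
    using that unfolding dirs_def by (simp add: scaleR_scaleR)
  ultimately show ?thesis unfolding subspace_def by blast
qed

lemma simple_in_aff: "simple_in n w b F m \<Longrightarrow> S \<subseteq> {..<n} \<Longrightarrow> card S \<le> m \<Longrightarrow>
    aff_dim (F \<inter> \<Inter>(hyp w b ` S)) = int m - int (card S)"
  unfolding simple_in_def by blast

lemma simple_in_empty: "simple_in n w b F m \<Longrightarrow> S \<subseteq> {..<n} \<Longrightarrow> card S = Suc m \<Longrightarrow>
    F \<inter> \<Inter>(hyp w b ` S) = {}"
  unfolding simple_in_def by blast

lemma simple_in_dim: "simple_in n w b F m \<Longrightarrow> aff_dim F = int m"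
  using simple_in_aff[of n w b F m "{}"] by simp

lemma simple_in_ne: "simple_in n w b F m \<Longrightarrow> F \<noteq> {}"
  using simple_in_dim[of n w b F m] by auto

lemma simple_in_single: "simple_in n w b F m \<Longrightarrow> S \<subseteq> {..<n} \<Longrightarrow> card S = m \<Longrightarrow>
    \<exists>z. F \<inter> \<Inter>(hyp w b ` S) = {z}"
proof -
  assume a: "simple_in n w b F m" "S \<subseteq> {..<n}" "card S = m"
  then have "aff_dim (F \<inter> \<Inter>(hyp w b ` S)) = 0" using simple_in_aff[OF a(1,2)] by simp
  then show ?thesis by (simp add: aff_dim_eq_0)
qed

lemma simple_in_mono: "simple_in n w b F m \<Longrightarrow> n' \<le> n \<Longrightarrow> simple_in n' w b F m"
proof -
  assume a: "simple_in n w b F m" "n' \<le> n"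
  show ?thesis unfolding simple_in_def
  proof (intro allI impI)
    fix S assume "S \<subseteq> {..<n'}"
    then have "S \<subseteq> {..<n}" using a(2) by auto
    then show "(card S \<le> m \<longrightarrow> aff_dim (F \<inter> \<Inter> (hyp w b ` S)) = int m - int (card S)) \<and>
          (card S = Suc m \<longrightarrow> F \<inter> \<Inter> (hyp w b ` S) = {})"
      using simple_in_aff[OF a(1)] simple_in_empty[OF a(1)] by blast
  qed
qed

lemma simple_in_hyp:
  assumes "simple_in (Suc n) w b F (Suc m)"
  shows "simple_in n w b (F \<inter> hyp w b n) m"
  unfolding simple_in_def
proof (intro allI impI conjI)
  fix S assume S: "S \<subseteq> {..<n}"
  have nS: "n \<notin> S" using S by auto
  have fin: "finite S" using S finite_subset by blast
  have eq: "F \<inter> hyp w b n \<inter> \<Inter>(hyp w b ` S) = F \<inter> \<Inter>(hyp w b ` insert n S)" by auto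
  have S': "insert n S \<subseteq> {..<Suc n}" using S by auto
  have c: "card (insert n S) = Suc (card S)" using nS fin by simp
  { assume "card S \<le> m"
    then show "aff_dim (F \<inter> hyp w b n \<inter> \<Inter>(hyp w b ` S)) = int m - int (card S)"
      using simple_in_aff[OF assms S'] eq c by simp }
  { assume "card S = Suc m"
    then show "F \<inter> hyp w b n \<inter> \<Inter>(hyp w b ` S) = {}"
      using simple_in_empty[OF assms S'] eq c by simp }
qed




lemma perturb:
  assumes p: "p \<in> RR n w b F c" and u: "u \<in> dirs F"
  shows "\<exists>e>0. \<forall>t. \<bar>t\<bar> \<le> e \<longrightarrow> p + t *\<^sub>R u \<in> RR n w b F c"
proof -
  define g where "g i = sg c i * (w i \<bullet> p - b i) / (2 * (\<bar>w i \<bullet> u\<bar> + 1))" for i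
  define e where "e = Min (insert 1 (g ` {..<n}))"
  have gpos: "g i > 0" if "i < n" for i
    using p that unfolding g_def RR_def by (auto intro!: divide_pos_pos)
  have epos: "e > 0" unfolding e_def using gpos by (subst Min_gr_iff) auto
  have ele: "e \<le> g i" if "i < n" for i unfolding e_def using that by (intro Min_le) auto
  show ?thesis
  proof (intro exI[of _ e] conjI allI impI epos)
    fix t :: real assume t: "\<bar>t\<bar> \<le> e"
    have "p + t *\<^sub>R u \<in> F" using p u unfolding RR_def dirs_def by auto
    moreover have "0 < sg c i * (w i \<bullet> (p + t *\<^sub>R u) - b i)" if i: "i < n" for i
    proof -
      let ?a = "sg c i * (w i \<bullet> p - b i)" and ?q = "\<bar>w i \<bullet> u\<bar>"
      have apos: "?a > 0" using p i unfolding RR_def by auto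
      have "\<bar>t\<bar> \<le> ?a / (2 * (?q + 1))" using t ele[OF i] unfolding g_def by simp
      then have "\<bar>t\<bar> * (2 * (?q + 1)) \<le> ?a" by (simp add: field_simps)
      moreover have "\<bar>t\<bar> * ?q \<le> \<bar>t\<bar> * (?q + 1)" by (simp add: mult_left_mono)
      ultimately have "\<bar>t\<bar> * ?q < ?a" using apos
        by (simp add: algebra_simps)
      moreover have "\<bar>sg c i * (t * (w i \<bullet> u))\<bar> = \<bar>t\<bar> * ?q"
        using sg_cases[of c i] by (auto simp: abs_mult)
      moreover have "sg c i * (w i \<bullet> (p + t *\<^sub>R u) - b i) = ?a + sg c i * (t * (w i \<bullet> u))"
        by (simp add: inner_add_right algebra_simps)
      ultimately show ?thesis by linarith
    qed
    ultimately show "p + t *\<^sub>R u \<in> RR n w b F c" unfolding RR_def by auto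
  qed
qed

lemma RR_Suc_out: "c \<subseteq> {..<n} \<Longrightarrow> RR (Suc n) w b F c = {x\<in>RR n w b F c. w n \<bullet> x < b n}"
  unfolding RR_def sg_def by (auto simp: less_Suc_eq)

lemma RR_Suc_in: "c \<subseteq> {..<n} \<Longrightarrow> RR (Suc n) w b F (insert n c) = {x\<in>RR n w b F c. b n < w n \<bullet> x}"
  unfolding RR_def sg_def by (auto simp: less_Suc_eq)

lemma RR_hyp: "RR n w b (F \<inter> hyp w b j) c = RR n w b F c \<inter> hyp w b j"
  unfolding RR_def by auto

lemma Cl_single:
  assumes "F = {z}" "\<And>i. i < n \<Longrightarrow> z \<notin> hyp w b i"
  shows "Cl n w b F = {sig n w b z}"
proof -
  have zin: "z \<in> F - (\<Union>i<n. hyp w b i)" using assms by auto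
  show ?thesis
  proof
    show "Cl n w b F \<subseteq> {sig n w b z}"
    proof
      fix c assume "c \<in> Cl n w b F"
      then obtain x where "x \<in> RR n w b F c" "c \<subseteq> {..<n}" unfolding Cl_def by auto
      moreover then have "x = z" using assms unfolding RR_def by auto
      ultimately show "c \<in> {sig n w b z}" using RR_sig_eq by blast
    qed
    show "{sig n w b z} \<subseteq> Cl n w b F" using in_RR_sig[OF zin] unfolding Cl_def sig_def by auto
  qed
qed




lemma card_Cl:
  assumes "affine F" "simple_in n w b F m"
  shows "card (Cl n w b F) = NN n m"
  using assms
proof (induction n arbitrary: F m)
  case 0
  then have "F \<noteq> {}" using simple_in_ne by blast
  then have "Cl 0 w b F = {{}}" unfolding Cl_def RR_def by auto
  then show ?case by (simp add: NN_n0)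
next
  case (Suc n)
  show ?case
  proof (cases m)
    case 0
    obtain z where z: "F = {z}" using simple_in_single[OF Suc.prems(2), of "{}"] 0 by auto
    have "z \<notin> hyp w b i" if "i < Suc n" for i
      using simple_in_empty[OF Suc.prems(2), of "{i}"] that 0 z by auto
    then have "Cl (Suc n) w b F = {sig (Suc n) w b z}" by (rule Cl_single[OF z])
    then show ?thesis using 0 by simp
  next
    case (Suc m')
    note m = this
    have sF: "simple_in n w b F m" using Suc.prems(2) simple_in_mono by fastforce
    have sF': "simple_in n w b (F \<inter> hyp w b n) m'" using simple_in_hyp Suc.prems(2) m by blast
    have aF': "affine (F \<inter> hyp w b n)" using Suc.prems(1) affine_hyp by (blast intro: affine_Int)
    have IH1: "card (Cl n w b F) = NN n m" using Suc.IH[OF Suc.prems(1) sF] .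
    have IH2: "card (Cl n w b (F \<inter> hyp w b n)) = NN n m'" using Suc.IH[OF aF' sF'] .
    define A where "A = {c \<in> Cl n w b F. RR (Suc n) w b F c \<noteq> {}}"
    define B where "B = {c \<in> Cl n w b F. RR (Suc n) w b F (insert n c) \<noteq> {}}"
    have fin: "finite (Cl n w b F)"
      by (rule finite_subset[of _ "Pow {..<n}"]) (auto simp: Cl_def)
    have finA: "finite A" "finite B" using fin unfolding A_def B_def by auto
    have eqCl: "Cl (Suc n) w b F = A \<union> insert n ` B"
    proof (intro equalityI subsetI)
      fix c assume c: "c \<in> Cl (Suc n) w b F"
      then obtain x where x: "x \<in> RR (Suc n) w b F c" and cs: "c \<subseteq> {..<Suc n}" unfolding Cl_def by auto
      let ?c = "c - {n}"
      have c0: "?c \<subseteq> {..<n}" using cs by auto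
      have xr: "x \<in> RR n w b F ?c" using x unfolding RR_def sg_def by auto
      show "c \<in> A \<union> insert n ` B"
      proof (cases "n \<in> c")
        case True
        then have "c = insert n ?c" by auto
        then have "?c \<in> B" using x c0 xr unfolding B_def Cl_def by auto
        then show ?thesis using \<open>c = insert n ?c\<close> by blast
      next
        case False
        then have "?c = c" by auto
        then show ?thesis using x c0 xr unfolding A_def Cl_def by auto
      qed
    next
      fix c assume "c \<in> A \<union> insert n ` B"
      then show "c \<in> Cl (Suc n) w b F" unfolding A_def B_def Cl_def by auto
    qed
    have disj: "A \<inter> insert n ` B = {}" unfolding A_def Cl_def by auto
    have injB: "inj_on (insert n) B"
    proof (rule inj_onI)
      fix x y assume "x \<in> B" "y \<in> B" "insert n x = insert n y"
      moreover have "n \<notin> x" "n \<notin> y" using \<open>x \<in> B\<close> \<open>y \<in> B\<close> unfolding B_def Cl_def by auto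
      ultimately show "x = y" by (metis Diff_insert_absorb)
    qed
    have c1: "card (Cl (Suc n) w b F) = card A + card B"
      using eqCl disj finA injB by (simp add: card_Un_disjoint card_image)
    have notall: "\<exists>q\<in>F. w n \<bullet> q \<noteq> b n"
    proof (rule ccontr)
      assume "\<not> ?thesis"
      then have "F \<inter> hyp w b n = F" unfolding hyp_def by auto
      then show False using simple_in_dim[OF sF'] simple_in_dim[OF sF] m by simp
    qed
    have AuB: "A \<union> B = Cl n w b F"
    proof (intro equalityI subsetI)
      fix c assume "c \<in> A \<union> B" then show "c \<in> Cl n w b F" unfolding A_def B_def by auto
    next
      fix c assume c: "c \<in> Cl n w b F"
      then obtain x where x: "x \<in> RR n w b F c" and cs: "c \<subseteq> {..<n}" unfolding Cl_def by auto
      consider "w n \<bullet> x < b n" | "b n < w n \<bullet> x" | "w n \<bullet> x = b n" by linarith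
      then show "c \<in> A \<union> B"
      proof cases
        case 1
        then have "x \<in> RR (Suc n) w b F c" using RR_Suc_out[OF cs] x by blast
        then show ?thesis using c unfolding A_def by blast
      next
        case 2
        then have "x \<in> RR (Suc n) w b F (insert n c)" using RR_Suc_in[OF cs] x by blast
        then show ?thesis using c unfolding B_def by blast
      next
        case 3
        obtain q where q: "q \<in> F" "w n \<bullet> q \<noteq> b n" using notall by auto
        have xF: "x \<in> F" using x unfolding RR_def by auto
        obtain e where e: "e > 0" "\<And>t. \<bar>t\<bar> \<le> e \<Longrightarrow> x + t *\<^sub>R (q - x) \<in> RR n w b F c"
          using perturb[OF x dirsI[OF Suc.prems(1) xF q(1)]] by blast
        have v1: "w n \<bullet> (x + e *\<^sub>R (q - x)) = b n + e * (w n \<bullet> q - b n)"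
          using 3 by (simp add: inner_add_right inner_diff_right algebra_simps)
        have v2: "w n \<bullet> (x + (-e) *\<^sub>R (q - x)) = b n - e * (w n \<bullet> q - b n)"
          using 3 by (simp add: inner_add_right inner_diff_right algebra_simps)
        have m1: "x + e *\<^sub>R (q - x) \<in> RR n w b F c" "x + (-e) *\<^sub>R (q - x) \<in> RR n w b F c"
          using e(2)[of e] e(2)[of "-e"] e(1) by auto
        have "RR (Suc n) w b F c \<noteq> {}"
        proof (cases "w n \<bullet> q < b n")
          case True
          then have "e * (w n \<bullet> q - b n) < 0" using e(1) by (simp add: mult_pos_neg)
          then have "w n \<bullet> (x + e *\<^sub>R (q - x)) < b n" using v1 by linarith
          then show ?thesis using m1(1) unfolding RR_Suc_out[OF cs] by blast
        next
          case False
          then have "e * (w n \<bullet> q - b n) > 0" using e(1) q(2) by simp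
          then have "w n \<bullet> (x + (-e) *\<^sub>R (q - x)) < b n" using v2 by linarith
          then show ?thesis using m1(2) unfolding RR_Suc_out[OF cs] by blast
        qed
        then show ?thesis using c unfolding A_def by auto
      qed
    qed
    have AiB: "A \<inter> B = Cl n w b (F \<inter> hyp w b n)"
    proof (intro equalityI subsetI)
      fix c assume c: "c \<in> A \<inter> B"
      then have cs: "c \<subseteq> {..<n}" unfolding A_def Cl_def by auto
      obtain x y where x0: "x \<in> RR (Suc n) w b F c" and y0: "y \<in> RR (Suc n) w b F (insert n c)"
        using c unfolding A_def B_def by auto
      have x: "x \<in> RR n w b F c" "w n \<bullet> x < b n" using x0 RR_Suc_out[OF cs] by auto
      have y: "y \<in> RR n w b F c" "b n < w n \<bullet> y" using y0 RR_Suc_in[OF cs] by auto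
      obtain z where "z \<in> RR n w b F c" "w n \<bullet> z = b n"
        using connected_ivt_hyperplane[OF convex_connected[OF convex_RR[OF Suc.prems(1)]] x(1) y(1), of "w n" "b n"] x y by auto
      then have "z \<in> RR n w b (F \<inter> hyp w b n) c" unfolding RR_hyp by (auto simp: hyp_def)
      then show "c \<in> Cl n w b (F \<inter> hyp w b n)" using cs unfolding Cl_def by auto
    next
      fix c assume c: "c \<in> Cl n w b (F \<inter> hyp w b n)"
      then have cs: "c \<subseteq> {..<n}" unfolding Cl_def by auto
      obtain x where "x \<in> RR n w b (F \<inter> hyp w b n) c" using c unfolding Cl_def by auto
      then have x: "x \<in> RR n w b F c" "w n \<bullet> x = b n" unfolding RR_hyp by (auto simp: hyp_def)
      obtain q where q: "q \<in> F" "w n \<bullet> q \<noteq> b n" using notall by auto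
      have xF: "x \<in> F" using x unfolding RR_def by auto
      obtain e where e: "e > 0" "\<And>t. \<bar>t\<bar> \<le> e \<Longrightarrow> x + t *\<^sub>R (q - x) \<in> RR n w b F c"
        using perturb[OF x(1) dirsI[OF Suc.prems(1) xF q(1)]] by blast
      have v1: "w n \<bullet> (x + e *\<^sub>R (q - x)) = b n + e * (w n \<bullet> q - b n)"
        using x(2) by (simp add: inner_add_right inner_diff_right algebra_simps)
      have v2: "w n \<bullet> (x + (-e) *\<^sub>R (q - x)) = b n - e * (w n \<bullet> q - b n)"
        using x(2) by (simp add: inner_add_right inner_diff_right algebra_simps)
      have m1: "x + e *\<^sub>R (q - x) \<in> RR n w b F c" "x + (-e) *\<^sub>R (q - x) \<in> RR n w b F c"
        using e(2)[of e] e(2)[of "-e"] e(1) by auto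
      have cC: "c \<in> Cl n w b F" using x cs unfolding Cl_def by auto
      show "c \<in> A \<inter> B"
      proof (cases "w n \<bullet> q < b n")
        case True
        then have "e * (w n \<bullet> q - b n) < 0" using e(1) by (simp add: mult_pos_neg)
        then have "w n \<bullet> (x + e *\<^sub>R (q - x)) < b n" "b n < w n \<bullet> (x + (-e) *\<^sub>R (q - x))" using v1 v2 by linarith+
        then have "x + e *\<^sub>R (q - x) \<in> RR (Suc n) w b F c" "x + (-e) *\<^sub>R (q - x) \<in> RR (Suc n) w b F (insert n c)"
          using m1 RR_Suc_out[OF cs] RR_Suc_in[OF cs] by blast+
        then show ?thesis using cC unfolding A_def B_def by blast
      next
        case False
        then have "e * (w n \<bullet> q - b n) > 0" using e(1) q(2) by simp
        then have "b n < w n \<bullet> (x + e *\<^sub>R (q - x))" "w n \<bullet> (x + (-e) *\<^sub>R (q - x)) < b n" using v1 v2 by linarith+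
        then have "x + (-e) *\<^sub>R (q - x) \<in> RR (Suc n) w b F c" "x + e *\<^sub>R (q - x) \<in> RR (Suc n) w b F (insert n c)"
          using m1 RR_Suc_out[OF cs] RR_Suc_in[OF cs] by blast+
        then show ?thesis using cC unfolding A_def B_def by blast
      qed
    qed
    have "card A + card B = card (A \<union> B) + card (A \<inter> B)" using card_Un_Int[OF finA] by simp
    then have "card (Cl (Suc n) w b F) = NN n (Suc m') + NN n m'" using c1 AuB AiB IH1 IH2 m by simp
    then show ?thesis using m NN_Suc by simp
  qed
qed





lemma closed_WW: assumes "affine F" shows "closed (WW n w b F c)"
proof -
  have "WW n w b F c = F \<inter> (\<Inter>i\<in>{..<n}. {x. 0 \<le> sg c i * (w i \<bullet> x - b i)})"
    unfolding WW_def by auto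
  moreover have "closed {x. 0 \<le> sg c i * (w i \<bullet> x - b i)}" for i
    by (rule closed_Collect_le) (intro continuous_intros)+
  ultimately show ?thesis using affine_closed[OF assms] by (auto intro!: closed_Int closed_INT)
qed

lemma closure_RR_sub: "affine F \<Longrightarrow> closure (RR n w b F c) \<subseteq> WW n w b F c"
  by (rule closure_minimal[OF RR_sub_WW closed_WW])

lemma seg_RR:
  assumes F: "affine F" and x: "x \<in> WW n w b F c" and y: "y \<in> RR n w b F c" and t: "0 < t" "t \<le> 1"
  shows "x + t *\<^sub>R (y - x) \<in> RR n w b F c"
proof -
  have xF: "x \<in> F" and yF: "y \<in> F" using x y unfolding WW_def RR_def by auto
  have "x + t *\<^sub>R (y - x) \<in> F" using mem_affine_3_minus[OF F xF yF xF] .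
  moreover have "0 < sg c i * (w i \<bullet> (x + t *\<^sub>R (y - x)) - b i)" if i: "i < n" for i
  proof -
    have a: "0 \<le> sg c i * (w i \<bullet> x - b i)" "0 < sg c i * (w i \<bullet> y - b i)"
      using x y i unfolding WW_def RR_def by auto
    have "sg c i * (w i \<bullet> (x + t *\<^sub>R (y - x)) - b i)
       = (1 - t) * (sg c i * (w i \<bullet> x - b i)) + t * (sg c i * (w i \<bullet> y - b i))"
      by (simp add: inner_add_right inner_diff_right algebra_simps)
    moreover have "0 \<le> (1 - t) * (sg c i * (w i \<bullet> x - b i))" using a t by simp
    moreover have "0 < t * (sg c i * (w i \<bullet> y - b i))" using a t by simp
    ultimately show ?thesis by linarith
  qed
  ultimately show ?thesis unfolding RR_def by auto
qed

lemma WW_sub_closure: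
  assumes F: "affine F" and ne: "RR n w b F c \<noteq> {}"
  shows "WW n w b F c \<subseteq> closure (RR n w b F c)"
proof
  fix x assume x: "x \<in> WW n w b F c"
  obtain y where y: "y \<in> RR n w b F c" using ne by auto
  show "x \<in> closure (RR n w b F c)" unfolding closure_approachable
  proof (intro allI impI)
    fix e :: real assume e: "e > 0"
    define t where "t = min 1 (e / (2 * (norm (y - x) + 1)))"
    have np: "0 < norm (y - x) + 1" using norm_ge_zero[of "y - x"] by linarith
    then have "0 < e / (2 * (norm (y - x) + 1))" using e by (intro divide_pos_pos) auto
    then have t0: "0 < t" "t \<le> 1" unfolding t_def by auto
    have "t * norm (y - x) \<le> e / (2 * (norm (y - x) + 1)) * norm (y - x)"
      unfolding t_def by (intro mult_right_mono) auto
    also have "\<dots> < e"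
    proof -
      have "2 * (norm (y - x) + 1) = 2 * norm (y - x) + 2" by simp
      then have "norm (y - x) < 2 * (norm (y - x) + 1)" using norm_ge_zero[of "y - x"] by linarith
      then have "norm (y - x) / (norm (y - x) + 1) < 2" using np by (simp add: divide_less_eq)
      then have lt: "e * (norm (y - x) / (norm (y - x) + 1)) < e * 2" by (rule mult_strict_left_mono[OF _ e])
      have eq: "e / (2 * (norm (y - x) + 1)) * norm (y - x) = (e * (norm (y - x) / (norm (y - x) + 1))) / 2"
        by simp
      have "\<And>X. X < e * 2 \<Longrightarrow> X / 2 < e" by simp
      from this[OF lt] show ?thesis unfolding eq .
    qed
    finally have "dist (x + t *\<^sub>R (y - x)) x < e" using t0 by (simp add: dist_norm)
    then show "\<exists>z\<in>RR n w b F c. dist z x < e" using seg_RR[OF F x y t0] by blast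
  qed
qed

lemma closure_RR: "affine F \<Longrightarrow> RR n w b F c \<noteq> {} \<Longrightarrow> closure (RR n w b F c) = WW n w b F c"
  using closure_RR_sub WW_sub_closure by (metis subset_antisym)

lemma div_neg_mul: "d \<noteq> 0 \<Longrightarrow> (a / (- d)) * d = - (a::real)"
  by (simp add: field_simps)

lemma ray:
  assumes x: "x \<in> WW n w b F c" and u: "u \<in> dirs F" and i0: "i0 < n" "sg c i0 * (w i0 \<bullet> u) < 0"
  shows "\<exists>i t. i < n \<and> sg c i * (w i \<bullet> u) < 0 \<and>
     t = sg c i * (w i \<bullet> x - b i) / (- (sg c i * (w i \<bullet> u))) \<and>
     x + t *\<^sub>R u \<in> WW n w b F c \<and> w i \<bullet> (x + t *\<^sub>R u) = b i"
proof -
  define I where "I = {i. i < n \<and> sg c i * (w i \<bullet> u) < 0}"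
  define tt where "tt i = sg c i * (w i \<bullet> x - b i) / (- (sg c i * (w i \<bullet> u)))" for i
  have finI: "finite I" unfolding I_def by auto
  have neI: "I \<noteq> {}" using i0 unfolding I_def by auto
  obtain i where iI: "i \<in> I" and imin: "tt i = Min (tt ` I)"
    using Min_in[OF finite_imageI[OF finI] ] neI by (metis (no_types, lifting) empty_is_image imageE)
  define t where "t = tt i"
  have tle: "t \<le> tt l" if "l \<in> I" for l unfolding t_def imin using that finI by simp
  have xF: "x \<in> F" using x unfolding WW_def by auto
  have ttmul: "tt l * (sg c l * (w l \<bullet> u)) = - (sg c l * (w l \<bullet> x - b l))" if "l \<in> I" for l
    using that unfolding tt_def I_def by (intro div_neg_mul) auto
  have n1: "0 \<le> sg c i * (w i \<bullet> x - b i)" "0 < - (sg c i * (w i \<bullet> u))"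
    using iI x unfolding I_def WW_def by auto
  have t0: "t \<ge> 0" unfolding t_def tt_def by (rule divide_nonneg_pos[OF n1])
  have expand: "sg c l * (w l \<bullet> (x + t *\<^sub>R u) - b l) = sg c l * (w l \<bullet> x - b l) + t * (sg c l * (w l \<bullet> u))" for l
    by (simp add: inner_add_right algebra_simps)
  have "0 \<le> sg c l * (w l \<bullet> (x + t *\<^sub>R u) - b l)" if l: "l < n" for l
  proof (cases "l \<in> I")
    case True
    have neg: "sg c l * (w l \<bullet> u) < 0" using True unfolding I_def by auto
    have "tt l * (sg c l * (w l \<bullet> u)) \<le> t * (sg c l * (w l \<bullet> u))"
      using tle[OF True] neg by (simp add: mult_right_mono_neg)
    then show ?thesis using ttmul[OF True] expand[of l] by linarith
  next
    case False
    then have "0 \<le> sg c l * (w l \<bullet> u)" using l unfolding I_def by auto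
    moreover have "0 \<le> sg c l * (w l \<bullet> x - b l)" using x l unfolding WW_def by auto
    ultimately show ?thesis using expand[of l] t0 by simp
  qed
  moreover have "x + t *\<^sub>R u \<in> F" using u xF unfolding dirs_def by auto
  ultimately have inW: "x + t *\<^sub>R u \<in> WW n w b F c" unfolding WW_def by auto
  have "sg c i * (w i \<bullet> (x + t *\<^sub>R u) - b i) = 0" using expand[of i] ttmul[OF iI] unfolding t_def by simp
  then have "w i \<bullet> (x + t *\<^sub>R u) = b i" by simp
  then show ?thesis using iI inW unfolding I_def t_def tt_def by blast
qed

lemma no_ray:
  assumes x: "x \<in> WW n w b F c" and u: "u \<in> dirs F" and all: "\<forall>i<n. 0 \<le> sg c i * (w i \<bullet> u)" and t: "t \<ge> 0"
  shows "x + t *\<^sub>R u \<in> WW n w b F c"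
proof -
  have "0 \<le> sg c l * (w l \<bullet> (x + t *\<^sub>R u) - b l)" if l: "l < n" for l
  proof -
    have "sg c l * (w l \<bullet> (x + t *\<^sub>R u) - b l) = sg c l * (w l \<bullet> x - b l) + t * (sg c l * (w l \<bullet> u))"
      by (simp add: inner_add_right algebra_simps)
    moreover have "0 \<le> sg c l * (w l \<bullet> x - b l)" using x l unfolding WW_def by auto
    moreover have "0 \<le> t * (sg c l * (w l \<bullet> u))" using all l t by simp
    ultimately show ?thesis by linarith
  qed
  moreover have "x + t *\<^sub>R u \<in> F" using u x unfolding dirs_def WW_def by auto
  ultimately show ?thesis unfolding WW_def by auto
qed




lemma WW_F: "x \<in> WW n w b F c \<Longrightarrow> x \<in> F" unfolding WW_def by auto

lemma dirs_add: "u \<in> dirs F \<Longrightarrow> x \<in> F \<Longrightarrow> x + u \<in> F"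
proof -
  assume "u \<in> dirs F" "x \<in> F"
  then have "x + 1 *\<^sub>R u \<in> F" unfolding dirs_def by blast
  then show ?thesis by simp
qed

lemma on_hyps_add:
  assumes "\<forall>i\<in>S. w i \<bullet> x = b i" "\<forall>i\<in>S. w i \<bullet> u = 0"
  shows "\<forall>i\<in>S. w i \<bullet> (x + t *\<^sub>R u) = b i"
  using assms by (simp add: inner_add_right)

lemma Inter_hyp_iff: "x \<in> \<Inter>(hyp w b ` S) \<longleftrightarrow> (\<forall>i\<in>S. w i \<bullet> x = b i)"
  unfolding hyp_def by auto

lemma zero_dir:
  fixes F :: "'a::euclidean_space set"
  assumes s: "simple_in n w b F m" and S: "S \<subseteq> {..<n}" "card S = m"
    and u: "u \<in> dirs F" and z0: "\<forall>i\<in>S. w i \<bullet> u = 0"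
  shows "u = 0"
proof -
  obtain z where z: "F \<inter> \<Inter>(hyp w b ` S) = {z}" using simple_in_single[OF s S] by auto
  have zF: "z \<in> F" and zS: "\<forall>i\<in>S. w i \<bullet> z = b i" using z Inter_hyp_iff[of z w b S] by auto
  have "z + u \<in> F" using dirs_add[OF u zF] .
  moreover have "\<forall>i\<in>S. w i \<bullet> (z + u) = b i" using zS z0 by (simp add: inner_add_right)
  ultimately have "z + u \<in> F \<inter> \<Inter>(hyp w b ` S)" using Inter_hyp_iff[of "z+u" w b S] by auto
  then show ?thesis using z by auto
qed

lemma vertex_exists_aux:
  fixes F :: "'a::euclidean_space set"
  assumes F: "affine F" and s: "simple_in n w b F m" and mn: "m \<le> n" and c: "c \<in> Cl n w b F"
  shows "r \<le> m \<Longrightarrow> \<exists>v S. v \<in> WW n w b F c \<and> S \<subseteq> {..<n} \<and> card S = r \<and> (\<forall>i\<in>S. w i \<bullet> v = b i)"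
proof (induction r)
  case 0
  obtain x where "x \<in> RR n w b F c" using c unfolding Cl_def by auto
  then have "x \<in> WW n w b F c" using RR_sub_WW by blast
  then show ?case by (intro exI[of _ x] exI[of _ "{}"]) auto
next
  case (Suc r)
  then obtain v S where v: "v \<in> WW n w b F c" and S: "S \<subseteq> {..<n}" "card S = r" and vS: "\<forall>i\<in>S. w i \<bullet> v = b i"
    by auto
  define G where "G = F \<inter> \<Inter>(hyp w b ` S)"
  have aG: "affine G" unfolding G_def by (rule affine_Int_hyps[OF F])
  have dG: "aff_dim G = int m - int r" unfolding G_def using simple_in_aff[OF s S(1)] S(2) Suc.prems by simp
  have vG: "v \<in> G" unfolding G_def using WW_F[OF v] vS Inter_hyp_iff[of v w b S] by auto
  have "G \<noteq> {v}" using dG Suc.prems by auto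
  then obtain q where qG: "q \<in> G" and qv: "q \<noteq> v" using vG by blast
  define u where "u = q - v"
  have uG: "u \<in> dirs G" unfolding u_def by (rule dirsI[OF aG vG qG])
  have vF: "v \<in> F" and qF: "q \<in> F" using vG qG unfolding G_def by auto
  have uF: "u \<in> dirs F" unfolding u_def by (rule dirsI[OF F vF qF])
  have uS: "\<forall>i\<in>S. w i \<bullet> u = 0" using vG qG unfolding G_def u_def
    by (auto simp: inner_diff_right hyp_def)
  have "\<exists>i<n. w i \<bullet> u \<noteq> 0"
  proof (rule ccontr)
    assume "\<not> ?thesis"
    then have all0: "\<forall>i\<in>{..<m}. w i \<bullet> u = 0" using mn by auto
    have "u = 0" by (rule zero_dir[OF s _ _ uF all0]) (use mn in auto)
    then show False using qv unfolding u_def by simp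
  qed
  then obtain i where i: "i < n" "w i \<bullet> u \<noteq> 0" by auto
  define u' where "u' = (if sg c i * (w i \<bullet> u) < 0 then u else - u)"
  have u'F: "u' \<in> dirs F" unfolding u'_def using uF subspace_dirs[of F]
    by (auto intro: subspace_neg)
  have u'S: "\<forall>l\<in>S. w l \<bullet> u' = 0" unfolding u'_def using uS by auto
  have neg: "sg c i * (w i \<bullet> u') < 0" unfolding u'_def using i(2) sg_cases[of c i]
    by (auto simp: not_less) 
  obtain i' t where i': "i' < n" "sg c i' * (w i' \<bullet> u') < 0"
    and inW: "v + t *\<^sub>R u' \<in> WW n w b F c" and on: "w i' \<bullet> (v + t *\<^sub>R u') = b i'"
    using ray[OF v u'F i(1) neg] by blast
  have i'S: "i' \<notin> S" using i' u'S by auto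
  define S' where "S' = insert i' S"
  have "S' \<subseteq> {..<n}" "card S' = Suc r" unfolding S'_def using S i' i'S finite_subset[OF S(1)] by auto
  moreover have "\<forall>l\<in>S'. w l \<bullet> (v + t *\<^sub>R u') = b l" unfolding S'_def using on on_hyps_add[OF vS u'S] by auto
  ultimately show ?case using inW by blast
qed

lemma vertex_exists:
  fixes F :: "'a::euclidean_space set"
  assumes F: "affine F" and s: "simple_in n w b F m" and mn: "m \<le> n" and c: "c \<in> Cl n w b F"
  shows "verts n w b F m \<inter> WW n w b F c \<noteq> {}"
proof -
  obtain v S where v: "v \<in> WW n w b F c" "S \<subseteq> {..<n}" "card S = m" "\<forall>i\<in>S. w i \<bullet> v = b i"
    using vertex_exists_aux[OF F s mn c order_refl] by blast
  have "v \<in> F" using WW_F[OF v(1)] .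
  moreover have "v \<in> \<Inter>(hyp w b ` S)" using v(4) Inter_hyp_iff[of v w b S] by blast
  ultimately have "v \<in> verts n w b F m" unfolding verts_def using v(2,3) by blast
  then have "v \<in> verts n w b F m \<inter> WW n w b F c" using v(1) by blast
  then show ?thesis by blast
qed

lemma finite_verts:
  fixes F :: "'a::euclidean_space set"
  assumes s: "simple_in n w b F m"
  shows "finite (verts n w b F m)"
proof -
  have "verts n w b F m \<subseteq> (\<Union>S\<in>{S. S \<subseteq> {..<n} \<and> card S = m}. F \<inter> \<Inter>(hyp w b ` S))"
    unfolding verts_def by blast
  moreover have "finite {S. S \<subseteq> {..<n} \<and> card S = m}"
    by (rule finite_subset[of _ "Pow {..<n}"]) auto
  moreover have "finite (F \<inter> \<Inter>(hyp w b ` S))" if "S \<subseteq> {..<n}" "card S = m" for S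
    using simple_in_single[OF s that] by auto
  ultimately have "finite (\<Union>S\<in>{S. S \<subseteq> {..<n} \<and> card S = m}. F \<inter> \<Inter>(hyp w b ` S))"
    by (intro finite_UN_I) auto
  then show ?thesis using \<open>verts n w b F m \<subseteq> _\<close> by (rule finite_subset[rotated])
qed

lemma dual_dir:
  fixes F :: "'a::euclidean_space set"
  assumes F: "affine F" and s: "simple_in n w b F m" and S: "S \<subseteq> {..<n}" "card S = m" and j: "j \<in> S"
  shows "\<exists>u\<in>dirs F. w j \<bullet> u = 1 \<and> (\<forall>l\<in>S-{j}. w l \<bullet> u = 0)"
proof -
  have fS: "finite S" using S(1) finite_subset by blast
  obtain z where z: "F \<inter> \<Inter>(hyp w b ` S) = {z}" using simple_in_single[OF s S] by auto
  define G where "G = F \<inter> \<Inter>(hyp w b ` (S - {j}))"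
  have cS: "card (S - {j}) = m - 1" using j fS S(2) by simp
  have "card S > 0" using j fS card_gt_0_iff by blast
  then have m1: "m \<ge> 1" using S(2) by simp
  have dG: "aff_dim G = 1" unfolding G_def using simple_in_aff[OF s, of "S - {j}"] S(1) cS m1 by auto
  have zG: "z \<in> G" using z unfolding G_def by auto
  have "G \<noteq> {z}" using dG by auto
  then obtain q where qG: "q \<in> G" and qz: "q \<noteq> z" using zG by blast
  define u0 where "u0 = q - z"
  have zF: "z \<in> F" and qF: "q \<in> F" using zG qG unfolding G_def by auto
  have u0F: "u0 \<in> dirs F" unfolding u0_def by (rule dirsI[OF F zF qF])
  have u0S: "\<forall>l\<in>S-{j}. w l \<bullet> u0 = 0" using zG qG unfolding G_def u0_def
    by (auto simp: inner_diff_right hyp_def)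
  have nz: "w j \<bullet> u0 \<noteq> 0"
  proof
    assume "w j \<bullet> u0 = 0"
    then have "\<forall>l\<in>S. w l \<bullet> u0 = 0" using u0S by auto
    then have "u0 = 0" by (rule zero_dir[OF s S u0F])
    then show False using qz unfolding u0_def by simp
  qed
  define u where "u = (1 / (w j \<bullet> u0)) *\<^sub>R u0"
  have "u \<in> dirs F" unfolding u_def using subspace_dirs[of F] u0F by (simp add: subspace_scale)
  moreover have "w j \<bullet> u = 1" unfolding u_def using nz by simp
  moreover have "\<forall>l\<in>S-{j}. w l \<bullet> u = 0" unfolding u_def using u0S by simp
  ultimately show ?thesis by blast
qed

lemma generic_dir:
  fixes F :: "'a::euclidean_space set"
  assumes s': "simple_in n w b (F \<inter> {x. a \<bullet> x = s}) (m - 1)"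
    and S: "S \<subseteq> {..<n}" "card S = m" and j: "j \<in> S"
    and u: "u \<in> dirs F" and uS: "\<forall>l\<in>S-{j}. w l \<bullet> u = 0" and uj: "w j \<bullet> u \<noteq> 0"
  shows "a \<bullet> u \<noteq> 0"
proof
  assume au: "a \<bullet> u = 0"
  have fS: "finite S" using S(1) finite_subset by blast
  have cS: "card (S - {j}) = m - 1" using j fS S(2) by simp
  have "u \<in> dirs (F \<inter> {x. a \<bullet> x = s})" using u au unfolding dirs_def by (auto simp: inner_add_right)
  moreover have "S - {j} \<subseteq> {..<n}" using S by auto
  ultimately have "u = 0" using zero_dir[OF s' _ cS _ uS] by blast
  then show False using uj by simp
qed

lemma bounded_side:
  fixes F :: "'a::euclidean_space set"
  assumes F: "affine F" and ne: "RR n w b F c \<noteq> {}" and dis: "RR n w b F c \<inter> {x. a \<bullet> x = s} = {}"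
    and p: "p \<in> WW n w b F c" and ps: "a \<bullet> p < s"
  shows "WW n w b F c \<subseteq> {x. a \<bullet> x \<le> s}"
proof -
  have "p \<in> closure (RR n w b F c)" using WW_sub_closure[OF F ne] p by auto
  then obtain z where z: "z \<in> RR n w b F c" "dist z p < (s - a \<bullet> p) / (norm a + 1)"
    unfolding closure_approachable using ps by (metis diff_gt_0_iff_gt divide_pos_pos norm_ge_zero add_nonneg_pos zero_less_one)
  have "\<bar>a \<bullet> z - a \<bullet> p\<bar> \<le> norm a * norm (z - p)"
    using Cauchy_Schwarz_ineq2[of a "z - p"] by (simp add: inner_diff_right)
  also have "\<dots> \<le> (norm a + 1) * dist z p" by (simp add: dist_norm mult_right_mono)
  also have "\<dots> < s - a \<bullet> p"
  proof -
    have "0 < norm a + 1" using norm_ge_zero[of a] by linarith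
    then show ?thesis using z(2) by (simp add: field_simps)
  qed
  finally have zs: "a \<bullet> z < s" by linarith
  have sub: "RR n w b F c \<subseteq> {x. a \<bullet> x \<le> s}"
  proof
    fix y assume y: "y \<in> RR n w b F c"
    show "y \<in> {x. a \<bullet> x \<le> s}"
    proof (rule ccontr)
      assume "y \<notin> {x. a \<bullet> x \<le> s}"
      then have "s \<le> a \<bullet> y" by auto
      then obtain r where "r \<in> RR n w b F c" "a \<bullet> r = s"
        using connected_ivt_hyperplane[OF convex_connected[OF convex_RR[OF F]] z(1) y, of a s] zs by auto
      then show False using dis by auto
    qed
  qed
  have "closure (RR n w b F c) \<subseteq> {x. a \<bullet> x \<le> s}"
    by (rule closure_minimal[OF sub closed_halfspace_le])
  then show ?thesis using WW_sub_closure[OF F ne] by auto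
qed

lemma simplex_step:
  fixes F :: "'a::euclidean_space set"
  assumes F: "affine F" and s: "simple_in n w b F m"
    and v: "v \<in> WW n w b F c" and S: "S \<subseteq> {..<n}" "card S = m" and vS: "\<forall>i\<in>S. w i \<bullet> v = b i"
    and j: "j \<in> S" and u: "u \<in> dirs F" and uS: "\<forall>l\<in>S-{j}. w l \<bullet> u = 0"
    and uj: "0 < sg c j * (w j \<bullet> u)" and au: "0 < a \<bullet> u"
    and bnd: "WW n w b F c \<subseteq> {x. a \<bullet> x \<le> s}"
  shows "\<exists>v'. v' \<in> verts n w b F m \<inter> WW n w b F c \<and> a \<bullet> v < a \<bullet> v'"
proof -
  have fS: "finite S" using S(1) finite_subset by blast
  have "\<exists>i<n. sg c i * (w i \<bullet> u) < 0"
  proof (rule ccontr)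
    assume "\<not> ?thesis"
    then have "\<forall>i<n. \<not> sg c i * (w i \<bullet> u) < 0" by blast
    then have all: "\<forall>i<n. 0 \<le> sg c i * (w i \<bullet> u)" by (simp add: not_less)
    define t where "t = (s - a \<bullet> v) / (a \<bullet> u) + 1"
    have t0: "t \<ge> 0"
    proof -
      have "a \<bullet> v \<le> s" using bnd v by auto
      then have "0 \<le> (s - a \<bullet> v) / (a \<bullet> u)" using au by simp
      then show ?thesis unfolding t_def by simp
    qed
    have "v + t *\<^sub>R u \<in> WW n w b F c" by (rule no_ray[OF v u all t0])
    then have le: "a \<bullet> (v + t *\<^sub>R u) \<le> s" using bnd by auto
    have "a \<bullet> (v + t *\<^sub>R u) = a \<bullet> v + t * (a \<bullet> u)" by (simp add: inner_add_right)
    also have "t * (a \<bullet> u) = (s - a \<bullet> v) + a \<bullet> u" unfolding t_def using au by (simp add: field_simps)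
    finally show False using le au by simp
  qed
  then obtain i0 where i0: "i0 < n" "sg c i0 * (w i0 \<bullet> u) < 0" by auto
  obtain i t where i: "i < n" "sg c i * (w i \<bullet> u) < 0"
    and tdef: "t = sg c i * (w i \<bullet> v - b i) / (- (sg c i * (w i \<bullet> u)))"
    and inW: "v + t *\<^sub>R u \<in> WW n w b F c" and on: "w i \<bullet> (v + t *\<^sub>R u) = b i"
    using ray[OF v u i0] by blast
  have iS: "i \<notin> S"
  proof
    assume "i \<in> S"
    show False
    proof (cases "i = j")
      case True then show False using i(2) uj by simp
    next
      case False then show False using i(2) uS \<open>i \<in> S\<close> by auto
    qed
  qed
  have fi: "w i \<bullet> v \<noteq> b i"
  proof
    assume "w i \<bullet> v = b i"
    then have "v \<in> F \<inter> \<Inter>(hyp w b ` insert i S)" using WW_F[OF v] vS Inter_hyp_iff[of v w b "insert i S"] by auto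
    moreover have "F \<inter> \<Inter>(hyp w b ` insert i S) = {}"
      by (rule simple_in_empty[OF s]) (use S i iS fS in auto)
    ultimately show False by auto
  qed
  have "0 \<le> sg c i * (w i \<bullet> v - b i)" using v i unfolding WW_def by auto
  moreover have "sg c i * (w i \<bullet> v - b i) \<noteq> 0" using fi by simp
  ultimately have "0 < sg c i * (w i \<bullet> v - b i)" by linarith
  then have tpos: "0 < t" unfolding tdef using i(2) by (intro divide_pos_pos) auto
  define v' where "v' = v + t *\<^sub>R u"
  have "a \<bullet> v' = a \<bullet> v + t * (a \<bullet> u)" unfolding v'_def by (simp add: inner_add_right)
  then have gt: "a \<bullet> v < a \<bullet> v'" using tpos au by (simp add: mult_pos_pos)
  define S' where "S' = insert i (S - {j})"
  have cS': "card S' = m" unfolding S'_def using fS iS j S(2)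
    by (simp add: card_Diff_singleton) (metis Suc_pred card_gt_0_iff empty_iff)
  have S'n: "S' \<subseteq> {..<n}" unfolding S'_def using S i by auto
  have "\<forall>l\<in>S-{j}. w l \<bullet> v' = b l" unfolding v'_def using on_hyps_add[of "S-{j}" w v b u t] vS uS by auto
  then have "\<forall>l\<in>S'. w l \<bullet> v' = b l" unfolding S'_def using on v'_def by auto
  then have "v' \<in> verts n w b F m" unfolding verts_def using WW_F[OF inW] cS' S'n Inter_hyp_iff v'_def by blast
  then show ?thesis using inW gt v'_def by blast
qed




lemma perturb_from:
  assumes p: "p \<in> F" and u: "u \<in> dirs F"
    and h: "\<forall>i<n. 0 < sg c i * (w i \<bullet> p - b i) \<or> (w i \<bullet> p = b i \<and> 0 < sg c i * (w i \<bullet> u))"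
  shows "\<exists>e>0. p + e *\<^sub>R u \<in> RR n w b F c"
proof -
  define J where "J = {i. i < n \<and> 0 < sg c i * (w i \<bullet> p - b i)}"
  define g where "g i = sg c i * (w i \<bullet> p - b i) / (2 * (\<bar>w i \<bullet> u\<bar> + 1))" for i
  define e where "e = Min (insert 1 (g ` J))"
  have finJ: "finite J" unfolding J_def by auto
  have gpos: "g i > 0" if "i \<in> J" for i
    using that unfolding g_def J_def by (auto intro!: divide_pos_pos)
  have epos: "e > 0" unfolding e_def using gpos finJ by (subst Min_gr_iff) auto
  have ele: "e \<le> g i" if "i \<in> J" for i unfolding e_def using that finJ by (intro Min_le) auto
  have "p + e *\<^sub>R u \<in> F" using p u unfolding dirs_def by auto
  moreover have "0 < sg c i * (w i \<bullet> (p + e *\<^sub>R u) - b i)" if i: "i < n" for i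
  proof -
    have ex: "sg c i * (w i \<bullet> (p + e *\<^sub>R u) - b i) = sg c i * (w i \<bullet> p - b i) + e * (sg c i * (w i \<bullet> u))"
      by (simp add: inner_add_right algebra_simps)
    show ?thesis
    proof (cases "i \<in> J")
      case True
      let ?a = "sg c i * (w i \<bullet> p - b i)" and ?q = "\<bar>w i \<bullet> u\<bar>"
      have apos: "?a > 0" using True unfolding J_def by auto
      have "e \<le> ?a / (2 * (?q + 1))" using ele[OF True] unfolding g_def by simp
      then have "e * (2 * (?q + 1)) \<le> ?a" by (simp add: field_simps)
      moreover have "e * ?q \<le> e * (?q + 1)" using epos by (simp add: mult_left_mono)
      ultimately have "e * ?q < ?a" using apos epos by (simp add: algebra_simps)
      moreover have "\<bar>e * (sg c i * (w i \<bullet> u))\<bar> = e * ?q"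
        using sg_cases[of c i] epos by (auto simp: abs_mult)
      ultimately show ?thesis using ex by linarith
    next
      case False
      then have "w i \<bullet> p = b i \<and> 0 < sg c i * (w i \<bullet> u)" using h i unfolding J_def by auto
      then have h2: "w i \<bullet> p = b i" "0 < sg c i * (w i \<bullet> u)" by auto
      have "0 < e * (sg c i * (w i \<bullet> u))" using epos h2(2) by simp
      then show ?thesis using ex h2(1) by (simp add: mult.left_commute)
    qed
  qed
  ultimately show ?thesis using epos unfolding RR_def by blast
qed

lemma sg_outside: "i \<notin> S \<Longrightarrow> sg ((c - S) \<union> T) i = sg c i" if "T \<subseteq> S"
  using that unfolding sg_def by auto

definition time :: "nat \<Rightarrow> (nat \<Rightarrow> 'a::euclidean_space) \<Rightarrow> (nat \<Rightarrow> real) \<Rightarrow> 'a set \<Rightarrow> nat \<Rightarrow> 'a \<Rightarrow> nat set \<Rightarrow> real" where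
  "time n w b F m a c = Max ((\<lambda>v. a \<bullet> v) ` (verts n w b F m \<inter> WW n w b F c))"

lemma core:
  fixes F :: "'a::euclidean_space set"
  assumes F: "affine F" and s: "simple_in n w b F m" and mn: "m \<le> n"
    and s': "simple_in n w b (F \<inter> {x. a \<bullet> x = r}) (m - 1)"
    and hv: "\<forall>v\<in>verts n w b F m. a \<bullet> v < r"
    and c: "c \<in> Cl n w b F" and dis: "RR n w b F c \<inter> {x. a \<bullet> x = r} = {}"
  shows "\<exists>S. S \<subseteq> {..<n} \<and> card S = m \<and> (\<forall>T\<subseteq>S. (c - S) \<union> T \<in> Cl n w b F) \<and>
     (\<forall>T\<subseteq>S. (c - S) \<union> T \<noteq> c \<longrightarrow> RR n w b F ((c - S) \<union> T) \<inter> {x. a \<bullet> x = r} = {} \<longrightarrow>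
         (\<exists>v'\<in>verts n w b F m \<inter> WW n w b F ((c - S) \<union> T). time n w b F m a c < a \<bullet> v'))"
proof -
  define V0 where "V0 = verts n w b F m \<inter> WW n w b F c"
  have finV0: "finite V0" unfolding V0_def using finite_verts[OF s] by auto
  have neV0: "V0 \<noteq> {}" unfolding V0_def by (rule vertex_exists[OF F s mn c])
  have "Max ((\<lambda>v. a \<bullet> v) ` V0) \<in> (\<lambda>v. a \<bullet> v) ` V0"
    by (rule Max_in) (use finV0 neV0 in auto)
  then obtain vs where vsV: "vs \<in> V0" and vsmax: "a \<bullet> vs = Max ((\<lambda>v. a \<bullet> v) ` V0)"
    by (metis imageE)
  have tm: "time n w b F m a c = a \<bullet> vs" unfolding time_def vsmax V0_def ..
  have maxle: "a \<bullet> v \<le> a \<bullet> vs" if "v \<in> V0" for v unfolding vsmax using finV0 that by simp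
  have vsW: "vs \<in> WW n w b F c" and vsv: "vs \<in> verts n w b F m" using vsV unfolding V0_def by auto
  obtain S where S: "S \<subseteq> {..<n}" "card S = m" and vsS0: "vs \<in> \<Inter>(hyp w b ` S)"
    using vsv unfolding verts_def by blast
  have vsS: "\<forall>i\<in>S. w i \<bullet> vs = b i" using vsS0 unfolding hyp_def by auto
  have fS: "finite S" using S(1) finite_subset by blast
  have vsF: "vs \<in> F" using WW_F[OF vsW] .
  have nonS: "w i \<bullet> vs \<noteq> b i" if "i < n" "i \<notin> S" for i
  proof
    assume "w i \<bullet> vs = b i"
    then have "vs \<in> F \<inter> \<Inter>(hyp w b ` insert i S)" using vsF vsS unfolding hyp_def by auto
    moreover have "F \<inter> \<Inter>(hyp w b ` insert i S) = {}"
      by (rule simple_in_empty[OF s]) (use S that fS in auto)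
    ultimately show False by auto
  qed
  have cs: "c \<subseteq> {..<n}" and neR: "RR n w b F c \<noteq> {}" using c unfolding Cl_def by auto
  have bnd: "WW n w b F c \<subseteq> {x. a \<bullet> x \<le> r}"
    by (rule bounded_side[OF F neR dis vsW]) (use hv vsv in auto)
  have "\<forall>j\<in>S. \<exists>u. u \<in> dirs F \<and> w j \<bullet> u = 1 \<and> (\<forall>l\<in>S-{j}. w l \<bullet> u = 0)"
    using dual_dir[OF F s S] by blast
  from bchoice[OF this] obtain e where e0: "\<forall>j\<in>S. e j \<in> dirs F \<and> w j \<bullet> e j = 1 \<and> (\<forall>l\<in>S-{j}. w l \<bullet> e j = 0)"
    by blast
  have e: "e j \<in> dirs F \<and> w j \<bullet> e j = 1 \<and> (\<forall>l\<in>S-{j}. w l \<bullet> e j = 0)" if "j \<in> S" for j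
    using e0 that by blast
  have gen: "a \<bullet> e j \<noteq> 0" if "j \<in> S" for j
    by (rule generic_dir[OF s' S that]) (use e[OF that] in auto)
  have esc: "(sg d j *\<^sub>R e j) \<in> dirs F" if "j \<in> S" for j d
    using e[OF that] subspace_dirs[of F] by (simp add: subspace_scale)
  have cdir: "a \<bullet> (sg c j *\<^sub>R e j) < 0" if j: "j \<in> S" for j
  proof (rule ccontr)
    assume "\<not> ?thesis"
    moreover have "a \<bullet> (sg c j *\<^sub>R e j) \<noteq> 0" using gen[OF j] by simp
    ultimately have pos: "0 < a \<bullet> (sg c j *\<^sub>R e j)" by linarith
    have "\<exists>v'. v' \<in> verts n w b F m \<inter> WW n w b F c \<and> a \<bullet> vs < a \<bullet> v'"
      by (rule simplex_step[OF F s vsW S vsS j esc[OF j] _ _ pos bnd]) (use e[OF j] in auto)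
    then show False using maxle unfolding V0_def by force
  qed
  have part1: "(c - S) \<union> T \<in> Cl n w b F" if T: "T \<subseteq> S" for T
  proof -
    define c' where "c' = (c - S) \<union> T"
    define U where "U = (\<Sum>j\<in>S. sg c' j *\<^sub>R e j)"
    have UF: "U \<in> dirs F" unfolding U_def
      by (rule subspace_sum[OF subspace_dirs]) (use esc in auto)
    have wU: "w i \<bullet> U = sg c' i" if i: "i \<in> S" for i
    proof -
      have "w i \<bullet> U = (\<Sum>j\<in>S. sg c' j * (w i \<bullet> e j))" unfolding U_def by (simp add: inner_sum_right)
      also have "\<dots> = (\<Sum>j\<in>S. if j = i then sg c' i else 0)"
      proof (rule sum.cong[OF refl])
        fix j assume j: "j \<in> S"
        show "sg c' j * (w i \<bullet> e j) = (if j = i then sg c' i else 0)"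
          using e[OF j] i by auto
      qed
      also have "\<dots> = sg c' i" using i fS by simp
      finally show ?thesis .
    qed
    have "\<forall>i<n. 0 < sg c' i * (w i \<bullet> vs - b i) \<or> (w i \<bullet> vs = b i \<and> 0 < sg c' i * (w i \<bullet> U))"
    proof (intro allI impI)
      fix i assume i: "i < n"
      show "0 < sg c' i * (w i \<bullet> vs - b i) \<or> (w i \<bullet> vs = b i \<and> 0 < sg c' i * (w i \<bullet> U))"
      proof (cases "i \<in> S")
        case True then show ?thesis using vsS wU by simp
      next
        case False
        have eqs: "sg c' i = sg c i" unfolding c'_def using sg_outside[OF T False] .
        have le: "0 \<le> sg c i * (w i \<bullet> vs - b i)" using vsW i unfolding WW_def by auto
        have ne: "sg c i * (w i \<bullet> vs - b i) \<noteq> 0" using nonS[OF i False] by simp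
        have "0 < sg c i * (w i \<bullet> vs - b i)" using order_le_neq_trans[OF le ne[symmetric]] .
        then show ?thesis using eqs by simp
      qed
    qed
    then obtain ep where "ep > 0" "vs + ep *\<^sub>R U \<in> RR n w b F c'" using perturb_from[OF vsF UF] by blast
    moreover have "c' \<subseteq> {..<n}" unfolding c'_def using cs S T by auto
    ultimately show ?thesis unfolding c'_def Cl_def by auto
  qed
  have part2: "\<exists>v'\<in>verts n w b F m \<inter> WW n w b F ((c - S) \<union> T). time n w b F m a c < a \<bullet> v'"
    if T: "T \<subseteq> S" and ne: "(c - S) \<union> T \<noteq> c" and dis': "RR n w b F ((c - S) \<union> T) \<inter> {x. a \<bullet> x = r} = {}" for T
  proof -
    define c' where "c' = (c - S) \<union> T"
    have "\<exists>j0\<in>S. (j0 \<in> c') \<noteq> (j0 \<in> c)"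
    proof (rule ccontr)
      assume "\<not> ?thesis"
      then have "c' = c" unfolding c'_def using T by blast
      then show False using ne unfolding c'_def by simp
    qed
    then obtain j0 where j0: "j0 \<in> S" "(j0 \<in> c') \<noteq> (j0 \<in> c)" by auto
    have sgj: "sg c' j0 = - sg c j0" using j0(2) unfolding sg_def by auto
    have c'Cl: "c' \<in> Cl n w b F" unfolding c'_def using part1[OF T] .
    have neR': "RR n w b F c' \<noteq> {}" using c'Cl unfolding Cl_def by auto
    have vsW': "vs \<in> WW n w b F c'"
    proof -
      have "0 \<le> sg c' i * (w i \<bullet> vs - b i)" if i: "i < n" for i
      proof (cases "i \<in> S")
        case True then show ?thesis using vsS by simp
      next
        case False
        have "sg c' i = sg c i" unfolding c'_def using sg_outside[OF T False] .
        then show ?thesis using vsW i unfolding WW_def by auto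
      qed
      then show ?thesis using vsF unfolding WW_def by auto
    qed
    have bnd': "WW n w b F c' \<subseteq> {x. a \<bullet> x \<le> r}"
      by (rule bounded_side[OF F neR' _ vsW']) (use dis' hv vsv c'_def in auto)
    define u where "u = sg c' j0 *\<^sub>R e j0"
    have au: "0 < a \<bullet> u" unfolding u_def sgj using cdir[OF j0(1)] by simp
    have "\<exists>v'. v' \<in> verts n w b F m \<inter> WW n w b F c' \<and> a \<bullet> vs < a \<bullet> v'"
      by (rule simplex_step[OF F s vsW' S vsS j0(1) esc[OF j0(1)] _ _ au[unfolded u_def] bnd'])
         (use e[OF j0(1)] in auto)
    then show ?thesis unfolding c'_def tm by blast
  qed
  show ?thesis using S part1 part2 by blast
qed




lemma vc:
  fixes F :: "'a::euclidean_space set"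
  assumes F: "affine F" and s: "simple_in n w b F m"
    and K: "K \<subseteq> {..<n}" "card K = Suc m" and B: "B \<inter> K = {}"
    and all: "\<forall>T\<subseteq>K. B \<union> T \<in> Cl n w b F"
  shows False
proof -
  have fK: "finite K" using K(1) finite_subset by blast
  obtain j where j: "j \<in> K" using K(2) by (metis card.empty ex_in_conv nat.distinct(1))
  define S0 where "S0 = K - {j}"
  have S0: "S0 \<subseteq> {..<n}" "card S0 = m" unfolding S0_def using K j fK by auto
  have jS0: "j \<notin> S0" unfolding S0_def by auto
  obtain z where z: "F \<inter> \<Inter>(hyp w b ` S0) = {z}" using simple_in_single[OF s S0] by auto
  have zF: "z \<in> F" and zS: "\<forall>i\<in>S0. w i \<bullet> z = b i" using z unfolding hyp_def by auto
  have "\<forall>i\<in>S0. \<exists>u. u \<in> dirs F \<and> w i \<bullet> u = 1 \<and> (\<forall>l\<in>S0-{i}. w l \<bullet> u = 0)"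
    using dual_dir[OF F s S0] by blast
  from bchoice[OF this] obtain e where e0: "\<forall>i\<in>S0. e i \<in> dirs F \<and> w i \<bullet> e i = 1 \<and> (\<forall>l\<in>S0-{i}. w l \<bullet> e i = 0)"
    by blast
  have e: "e i \<in> dirs F \<and> w i \<bullet> e i = 1 \<and> (\<forall>l\<in>S0-{i}. w l \<bullet> e i = 0)" if "i \<in> S0" for i
    using e0 that by blast
  have fS0: "finite S0" using S0(1) finite_subset by blast
  define c0 where "c0 = w j \<bullet> z - b j"
  have c0nz: "c0 \<noteq> 0"
  proof
    assume "c0 = 0"
    then have "z \<in> F \<inter> \<Inter>(hyp w b ` K)" using zF zS j unfolding c0_def hyp_def S0_def by auto
    moreover have "F \<inter> \<Inter>(hyp w b ` K) = {}" by (rule simple_in_empty[OF s K])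
    ultimately show False by auto
  qed
  define lam where "lam i = w j \<bullet> e i" for i
  define sig0 :: real where "sig0 = (if c0 > 0 then 1 else -1)"
  have sc0: "0 < sig0 * c0" unfolding sig0_def using c0nz by auto
  define T where "T = {i \<in> S0. 0 \<le> sig0 * lam i} \<union> (if c0 > 0 then {} else {j})"
  have TK: "T \<subseteq> K" unfolding T_def S0_def using j by auto
  have "B \<union> T \<in> Cl n w b F" using all TK by blast
  then obtain x where x: "x \<in> RR n w b F (B \<union> T)" unfolding Cl_def by auto
  have xF: "x \<in> F" using x unfolding RR_def by auto
  define f where "f i = w i \<bullet> x - b i" for i
  define y where "y = x + (-1) *\<^sub>R (\<Sum>i\<in>S0. f i *\<^sub>R e i)"
  have sumdir: "(\<Sum>i\<in>S0. f i *\<^sub>R e i) \<in> dirs F"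
    by (rule subspace_sum[OF subspace_dirs]) (use e subspace_dirs[of F] in \<open>auto simp: subspace_scale\<close>)
  have yF: "y \<in> F" unfolding y_def using sumdir xF unfolding dirs_def by blast
  have wsum: "w l \<bullet> (\<Sum>i\<in>S0. f i *\<^sub>R e i) = f l" if l: "l \<in> S0" for l
  proof -
    have "w l \<bullet> (\<Sum>i\<in>S0. f i *\<^sub>R e i) = (\<Sum>i\<in>S0. f i * (w l \<bullet> e i))" by (simp add: inner_sum_right)
    also have "\<dots> = (\<Sum>i\<in>S0. if i = l then f l else 0)"
    proof (rule sum.cong[OF refl])
      fix i assume i: "i \<in> S0"
      show "f i * (w l \<bullet> e i) = (if i = l then f l else 0)" using e[OF i] l by auto
    qed
    also have "\<dots> = f l" using l fS0 by simp
    finally show ?thesis .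
  qed
  have "\<forall>l\<in>S0. w l \<bullet> y = b l"
  proof
    fix l assume l: "l \<in> S0"
    have "w l \<bullet> y = w l \<bullet> x - w l \<bullet> (\<Sum>i\<in>S0. f i *\<^sub>R e i)" unfolding y_def by (simp add: inner_add_right inner_diff_right)
    then show "w l \<bullet> y = b l" using wsum[OF l] unfolding f_def by simp
  qed
  then have "y \<in> F \<inter> \<Inter>(hyp w b ` S0)" using yF unfolding hyp_def by auto
  then have yz: "y = z" using z by auto
  have xdec: "x = z + (\<Sum>i\<in>S0. f i *\<^sub>R e i)" using yz unfolding y_def by (simp add: algebra_simps)
  have "w j \<bullet> x = w j \<bullet> z + (\<Sum>i\<in>S0. f i * lam i)"
    by (subst xdec) (simp add: inner_add_right inner_sum_right lam_def)
  then have fj: "f j = c0 + (\<Sum>i\<in>S0. f i * lam i)" unfolding c0_def by (simp add: f_def)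
  have sgx: "0 < sg (B \<union> T) i * f i" if "i < n" for i using x that unfolding RR_def f_def by auto
  have terms: "0 \<le> sig0 * (f i * lam i)" if i: "i \<in> S0" for i
  proof -
    have iK: "i \<in> K" and iB: "i \<notin> B" using i B unfolding S0_def by auto
    have "i < n" using K(1) iK by auto
    then have pos: "0 < sg (B \<union> T) i * f i" using sgx by blast
    show ?thesis
    proof (cases "0 \<le> sig0 * lam i")
      case True
      then have "i \<in> T" unfolding T_def using i by auto
      then have "0 < f i" using pos unfolding sg_def by auto
      then show ?thesis using True by (metis mult.left_commute mult_nonneg_nonneg less_imp_le)
    next
      case False
      then have "i \<notin> T" unfolding T_def using i jS0 by auto
      then have "f i < 0" using pos iB unfolding sg_def by auto
      then show ?thesis using False
        by (metis mult.left_commute mult_nonpos_nonpos less_imp_le not_le)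
    qed
  qed
  have "0 \<le> (\<Sum>i\<in>S0. sig0 * (f i * lam i))" using terms by (simp add: sum_nonneg)
  then have "0 \<le> sig0 * (\<Sum>i\<in>S0. f i * lam i)" by (simp add: sum_distrib_left)
  then have A: "0 < sig0 * f j" unfolding fj using sc0 by (simp add: distrib_left)
  have jn: "j < n" using K(1) j by auto
  have jB: "j \<notin> B" using B j by auto
  have B2: "sig0 * f j < 0"
  proof (cases "c0 > 0")
    case True
    then have "j \<notin> T" unfolding T_def using jS0 by auto
    then have "f j < 0" using sgx[OF jn] jB unfolding sg_def by auto
    then show ?thesis using True unfolding sig0_def by simp
  next
    case False
    then have "j \<in> T" unfolding T_def by auto
    then have "0 < f j" using sgx[OF jn] unfolding sg_def by auto
    then show ?thesis using False unfolding sig0_def by simp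
  qed
  show False using A B2 by simp
qed

lemma vc_cube:
  fixes F :: "'a::euclidean_space set"
  assumes F: "affine F" and s: "simple_in n w b F m" and D: "D \<subseteq> Cl n w b F"
    and cube: "is_cube n D Q k"
  shows "k \<le> m"
proof (rule ccontr)
  assume "\<not> k \<le> m"
  then have km: "Suc m \<le> k" by simp
  obtain K B where KB: "K \<subseteq> {..<n}" "card K = k" "B \<subseteq> {..<n} - K" "Q = (\<lambda>T. B \<union> T) ` Pow K" "Q \<subseteq> D"
    using cube unfolding is_cube_def by blast
  have fK: "finite K" using KB(1) finite_subset by blast
  obtain K' where K': "K' \<subseteq> K" "card K' = Suc m" using obtain_subset_with_card_n[of "Suc m" K] km KB(2) by metis
  define B' where "B' = B"
  show False
  proof (rule vc[OF F s _ K'(2)])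
    show "K' \<subseteq> {..<n}" using K'(1) KB(1) by auto
    show "B \<inter> K' = {}" using KB(3) K'(1) by auto
    show "\<forall>T\<subseteq>K'. B \<union> T \<in> Cl n w b F"
    proof (intro allI impI)
      fix T assume "T \<subseteq> K'"
      then have "T \<in> Pow K" using K'(1) by auto
      then have "B \<union> T \<in> Q" using KB(4) by auto
      then show "B \<union> T \<in> Cl n w b F" using KB(5) D by auto
    qed
  qed
qed




lemma RR_mono_F: "F' \<subseteq> F \<Longrightarrow> RR n w b F' c \<subseteq> RR n w b F c"
  unfolding RR_def by auto

lemma Cl_mono: "F' \<subseteq> F \<Longrightarrow> Cl n w b F' \<subseteq> Cl n w b F"
  unfolding Cl_def using RR_mono_F by blast

lemma flat_anti: "k \<le> k' \<Longrightarrow> flat a s k' \<subseteq> flat a s k"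
  by (rule lift_Suc_antimono_le[of "flat a s"]) auto

lemma RR_flat_Suc: "RR n w b (flat a s (Suc k)) c = RR n w b (flat a s k) c \<inter> {x. a k \<bullet> x = s k}"
  unfolding RR_def by auto

lemma peeled_info:
  assumes "peeled_at n d w b a s k t c"
  shows "k \<le> d \<and> c \<in> Cl n w b (flat a s k) \<and> (k < d \<longrightarrow>
     RR n w b (flat a s k) c \<inter> {x. a k \<bullet> x = s k} = {} \<and> t = time n w b (flat a s k) (d - k) (a k) c)"
proof -
  from assms obtain K where k: "k \<le> d" and K: "K \<in> cells n w b (flat a s k)" "cell_concept n w b K = c"
    and rest: "if k < d then K \<inter> flat a s (Suc k) = {} \<and>
              t = Max ((\<lambda>v. a k \<bullet> v) ` (verts n w b (flat a s k) (d - k) \<inter> closure K)) else t = 0"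
    unfolding peeled_at_def by blast
  from K(1) obtain c0 where c0: "c0 \<in> Cl n w b (flat a s k)" "K = RR n w b (flat a s k) c0"
    unfolding cells_eq[OF affine_flat] by auto
  have cc: "c0 = c" using K(2) cell_concept_RR[OF c0(1)] c0(2) by simp
  have ne: "RR n w b (flat a s k) c \<noteq> {}" using c0(1) cc unfolding Cl_def by auto
  have cl: "closure K = WW n w b (flat a s k) c" using closure_RR[OF affine_flat ne] c0(2) cc by simp
  have "k < d \<longrightarrow> RR n w b (flat a s k) c \<inter> {x. a k \<bullet> x = s k} = {} \<and> t = time n w b (flat a s k) (d - k) (a k) c"
  proof
    assume kd: "k < d"
    then have r: "K \<inter> flat a s (Suc k) = {}" "t = Max ((\<lambda>v. a k \<bullet> v) ` (verts n w b (flat a s k) (d - k) \<inter> closure K))"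
      using rest by auto
    have "RR n w b (flat a s k) c \<inter> {x. a k \<bullet> x = s k} \<subseteq> K \<inter> flat a s (Suc k)"
      using c0(2) cc unfolding RR_def by auto
    then show "RR n w b (flat a s k) c \<inter> {x. a k \<bullet> x = s k} = {} \<and> t = time n w b (flat a s k) (d - k) (a k) c"
      using r cl unfolding time_def by auto
  qed
  then show ?thesis using k c0(1) cc by simp
qed

lemma downclosed:
  fixes A :: "nat set"
  assumes "finite A" "\<And>t t'. t \<in> A \<Longrightarrow> t' < t \<Longrightarrow> t' \<in> A"
  shows "A = {..<card A}"
proof (cases "A = {}")
  case True then show ?thesis by simp
next
  case False
  define M where "M = Suc (Max A)"
  have "A = {..<M}"
  proof
    show "A \<subseteq> {..<M}" unfolding M_def using assms(1) by (auto simp: less_Suc_eq_le)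
    show "{..<M} \<subseteq> A"
    proof
      fix x assume "x \<in> {..<M}"
      then have "x \<le> Max A" unfolding M_def by auto
      moreover have "Max A \<in> A" using Max_in[OF assms(1) False] .
      ultimately show "x \<in> A" using assms(2) by (cases "x = Max A") auto
    qed
  qed
  then show ?thesis by simp
qed

lemma card_nth_filter:
  assumes "distinct xs"
  shows "card {t. t < length xs \<and> Pr (xs ! t)} = card {x \<in> set xs. Pr x}"
proof -
  have "{x \<in> set xs. Pr x} = (\<lambda>t. xs ! t) ` {t. t < length xs \<and> Pr (xs ! t)}"
    by (auto simp: in_set_conv_nth)
  moreover have "inj_on (\<lambda>t. xs ! t) {t. t < length xs \<and> Pr (xs ! t)}"
    using assms by (auto simp: inj_on_def nth_eq_iff_index_eq)
  ultimately show ?thesis by (simp add: card_image)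
qed

lemma nth_notin_take: "distinct xs \<Longrightarrow> t < length xs \<Longrightarrow> xs ! t \<notin> set (take t xs)"
  by (auto simp: in_set_conv_nth nth_eq_iff_index_eq)

lemma in_take_nth: "x \<in> set (take t xs) \<Longrightarrow> \<exists>i<t. i < length xs \<and> xs ! i = x"
  by (auto simp: in_set_conv_nth)

lemma NN_step: "NN n (Suc m) = NN n m + (n choose Suc m)" by (simp add: NN_def)

lemma NN_mono: "NN n m \<le> NN n (m + k)"
  by (induction k) (auto simp: NN_step intro: le_trans)




theorem corollary3:
  fixes w a :: "nat \<Rightarrow> 'a::euclidean_space" and b s :: "nat \<Rightarrow> real"
    and n d :: nat and vs :: "nat set list"
  assumes "d = DIM('a)" and "d \<le> n"
    and "simple_in n w b UNIV d"
    and "sweep_ok n d w b a s"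
    and "sweep_order n d w b a s vs"
  shows "length vs = (\<Sum>k\<le>d. n choose (d - k))
     \<and> (\<forall>i j. i \<le> j \<and> j < length vs \<longrightarrow>
          max_cube_dim n (concept_class n w b - set (take j vs)) (vs ! j)
            \<le> max_cube_dim n (concept_class n w b - set (take i vs)) (vs ! i))
     \<and> (\<forall>k\<le>d. \<forall>t. (\<Sum>j<k. n choose (d - j)) \<le> t \<and> t < (\<Sum>j\<le>k. n choose (d - j)) \<longrightarrow>
          t < length vs \<and>
          max_cube_dim n (concept_class n w b - set (take t vs)) (vs ! t) = d - k)"
proof -
  note dDIM = assms(1) and dn = assms(2) and s0 = assms(3) and swok = assms(4) and swo = assms(5)
  define L where "L k = Cl n w b (flat a s k)" for k
  define C where "C = concept_class n w b"
  have CL0: "C = L 0" unfolding C_def L_def using concept_class_eq by simp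
  have d1: "1 \<le> d" using dDIM by simp
  have sw: "\<forall>v\<in>verts n w b (flat a s k) (d - k). a k \<bullet> v < s k"
    "simple_in n w b (flat a s (Suc k)) (d - Suc k)" if "k < d" for k
    using swok that unfolding sweep_ok_def by blast+
  have sk: "simple_in n w b (flat a s k) (d - k)" if "k \<le> d" for k
  proof (cases k)
    case 0 then show ?thesis using s0 by simp
  next
    case (Suc k') then show ?thesis using sw(2)[of k'] that by simp
  qed
  have cardL: "card (L k) = NN n (d - k)" if "k \<le> d" for k
    unfolding L_def by (rule card_Cl[OF affine_flat sk[OF that]])
  have finL: "finite (L k)" for k unfolding L_def
    by (rule finite_subset[of _ "Pow {..<n}"]) (auto simp: Cl_def)
  have Lanti: "L k' \<subseteq> L k" if "k \<le> k'" for k k'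
    unfolding L_def by (rule Cl_mono[OF flat_anti[OF that]])
  have LC: "L k \<subseteq> C" for k using Lanti[of 0 k] CL0 by simp
  have Csub: "c \<subseteq> {..<n}" if "c \<in> C" for c using that unfolding CL0 L_def Cl_def by auto
  define lev where "lev c = Max {k. k \<le> d \<and> c \<in> L k}" for c
  have levin: "lev c \<in> {k. k \<le> d \<and> c \<in> L k}" if "c \<in> C" for c
    unfolding lev_def by (rule Max_in) (use that CL0 in auto)
  have lev_le: "lev c \<le> d" if "c \<in> C" for c using levin[OF that] by simp
  have lev_iff: "c \<in> L k \<longleftrightarrow> k \<le> lev c" if "c \<in> C" "k \<le> d" for c k
  proof
    assume "c \<in> L k" then show "k \<le> lev c" unfolding lev_def using that(2) by (intro Max_ge) auto
  next
    assume "k \<le> lev c" then show "c \<in> L k" using levin[OF that(1)] Lanti by auto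
  qed
  have peeled_lev: "k = lev c" if p: "peeled_at n d w b a s k t c" for k t c
  proof -
    have pi: "k \<le> d" "c \<in> L k" using peeled_info[OF p] unfolding L_def by auto
    have cC: "c \<in> C" using pi(2) LC by auto
    have ge: "k \<le> lev c" using lev_iff[OF cC pi(1)] pi(2) by simp
    show ?thesis
    proof (cases "k < d")
      case True
      then have "RR n w b (flat a s k) c \<inter> {x. a k \<bullet> x = s k} = {}" using peeled_info[OF p] by auto
      then have "c \<notin> L (Suc k)" unfolding L_def Cl_def RR_flat_Suc by auto
      then have "\<not> Suc k \<le> lev c" using lev_iff[OF cC, of "Suc k"] True by simp
      then show ?thesis using ge by simp
    next
      case False then show ?thesis using ge lev_le[OF cC] pi(1) by simp
    qed
  qed
  have dist: "distinct vs" and setvs: "set vs = C"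
    and ord: "\<And>i j. i < j \<Longrightarrow> j < length vs \<Longrightarrow> (\<exists>k t k' t'. peeled_at n d w b a s k t (vs ! i) \<and> peeled_at n d w b a s k' t' (vs ! j)
                      \<and> (k < k' \<or> (k = k' \<and> t \<le> t')))"
    using swo unfolding sweep_order_def C_def by blast+
  have vsC: "vs ! t \<in> C" if "t < length vs" for t using that setvs nth_mem by blast
  have cardC: "card C = NN n d" using cardL[of 0] CL0 by simp
  have lenvs: "length vs = NN n d" using distinct_card[OF dist] setvs cardC by simp
  define P where "P k = (\<Sum>j<k. n choose (d - j))" for k
  have Pinv: "P k + NN n (d - k) = NN n d" if "k \<le> d" for k
    using that
  proof (induction k)
    case 0 then show ?case by (simp add: P_def)
  next
    case (Suc k)
    have e1: "d - k = Suc (d - Suc k)" using Suc.prems by simp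
    have "P (Suc k) = P k + (n choose (d - k))" by (simp add: P_def)
    moreover have "NN n (d - k) = NN n (d - Suc k) + (n choose (d - k))" using e1 NN_step by simp
    ultimately show ?case using Suc.IH Suc.prems by simp
  qed
  have Ptop: "P (Suc d) = NN n d"
  proof -
    have "P (Suc d) = P d + 1" by (simp add: P_def)
    then show ?thesis using Pinv[of d] by simp
  qed
  have conj1: "length vs = (\<Sum>k\<le>d. n choose (d - k))"
    using lenvs Ptop unfolding P_def by (simp add: lessThan_Suc_atMost)
  have len2: "2 \<le> length vs"
  proof -
    have "NN n 1 \<le> NN n (1 + (d - 1))" by (rule NN_mono)
    then have "NN n 1 \<le> NN n d" using d1 by simp
    moreover have "NN n 1 = 1 + n" by (simp add: NN_def)
    ultimately show ?thesis using lenvs d1 dn by simp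
  qed
  have sorted: "lev (vs ! i) \<le> lev (vs ! j)" if ij: "i \<le> j" "j < length vs" for i j
  proof (cases "i = j")
    case True then show ?thesis by simp
  next
    case False
    then have "i < j" using ij by simp
    then obtain k t k' t' where "peeled_at n d w b a s k t (vs ! i)" "peeled_at n d w b a s k' t' (vs ! j)"
        "k < k' \<or> (k = k' \<and> t \<le> t')"
      using ord[OF \<open>i < j\<close> ij(2)] by blast
    then show ?thesis using peeled_lev by fastforce
  qed
  have prefix: "lev (vs ! t) < k \<longleftrightarrow> t < P k" if "k \<le> Suc d" "t < length vs" for k t
  proof (cases "k = Suc d")
    case True
    then show ?thesis using lev_le[OF vsC[OF that(2)]] that(2) lenvs Ptop by simp
  next
    case False
    then have kd: "k \<le> d" using that by simp
    define A where "A = {t. t < length vs \<and> lev (vs ! t) < k}"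
    have finA: "finite A" unfolding A_def by auto
    have "card A = card {c \<in> set vs. lev c < k}" unfolding A_def by (rule card_nth_filter[OF dist])
    also have "{c \<in> set vs. lev c < k} = C - L k"
      using lev_iff kd LC setvs by (auto simp: not_le)
    also have "card (C - L k) = card C - card (L k)" using LC finL by (simp add: card_Diff_subset)
    also have "\<dots> = P k" using cardC cardL[OF kd] Pinv[OF kd] by simp
    finally have cA: "card A = P k" .
    have "A = {..<card A}"
    proof (rule downclosed[OF finA])
      fix t t' assume "t \<in> A" "t' < t"
      then show "t' \<in> A" unfolding A_def using sorted[of t' t] by fastforce
    qed
    then have "A = {..<P k}" using cA by simp
    then show ?thesis using that(2) unfolding A_def by blast
  qed
  have cube_dim: "max_cube_dim n (C - set (take t vs)) (vs ! t) = d - lev (vs ! t)" if tl: "t < length vs" for t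
  proof -
    define c where "c = vs ! t"
    define k where "k = lev c"
    define D where "D = C - set (take t vs)"
    have cC: "c \<in> C" unfolding c_def using vsC[OF tl] .
    have kd: "k \<le> d" unfolding k_def using lev_le[OF cC] .
    have cD: "c \<in> D" unfolding D_def c_def using cC nth_notin_take[OF dist tl] c_def by simp
    have DL: "D \<subseteq> L k"
    proof
      fix c' assume c': "c' \<in> D"
      then have "c' \<in> set vs" unfolding D_def using setvs by auto
      then obtain t' where t': "t' < length vs" "vs ! t' = c'" by (auto simp: in_set_conv_nth)
      have "\<not> t' < t"
      proof
        assume "t' < t"
        then have "c' \<in> set (take t vs)" using t' by (auto simp: in_set_conv_nth)
        then show False using c' unfolding D_def by auto
      qed
      then have "lev c \<le> lev c'" unfolding c_def using sorted[of t t'] t' by simp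
      then show "c' \<in> L k" unfolding k_def using lev_iff[of c' k] c' kd k_def unfolding D_def by auto
    qed
    have DCl: "D \<subseteq> Cl n w b (flat a s k)" using DL unfolding L_def by simp
    have ub: "k' \<le> d - k" if "is_cube n D Q k'" for Q k'
      by (rule vc_cube[OF affine_flat sk[OF kd] DCl that])
    have lb: "\<exists>Q. is_cube n D Q (d - k) \<and> c \<in> Q"
    proof (cases "k < d")
      case False
      then have kk: "k = d" using kd by simp
      have "is_cube n D {c} 0" unfolding is_cube_def
        by (rule exI[of _ "{}"], rule exI[of _ c]) (use cD Csub[OF cC] in auto)
      moreover have "d - k = 0" using kk by simp
      ultimately have "is_cube n D {c} (d - k)" by simp
      then show ?thesis by blast
    next
      case True
      define F where "F = flat a s k"
      have cL: "c \<in> Cl n w b F" using lev_iff[OF cC kd] unfolding F_def L_def k_def by simp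
      have "c \<notin> L (Suc k)" using lev_iff[OF cC, of "Suc k"] True unfolding k_def by simp
      then have dis: "RR n w b F c \<inter> {x. a k \<bullet> x = s k} = {}"
        using Csub[OF cC] unfolding F_def L_def Cl_def RR_flat_Suc by auto
      have s': "simple_in n w b (F \<inter> {x. a k \<bullet> x = s k}) (d - k - 1)"
      proof -
        have "flat a s (Suc k) = F \<inter> {x. a k \<bullet> x = s k}" unfolding F_def by simp
        moreover have "d - Suc k = d - k - 1" by simp
        ultimately show ?thesis using sw(2)[OF True] by simp
      qed
      have mn: "d - k \<le> n" using dn by simp
      obtain S where S: "S \<subseteq> {..<n}" "card S = d - k"
        and p1: "\<forall>T\<subseteq>S. (c - S) \<union> T \<in> Cl n w b F"
        and p2: "\<forall>T\<subseteq>S. (c - S) \<union> T \<noteq> c \<longrightarrow> RR n w b F ((c - S) \<union> T) \<inter> {x. a k \<bullet> x = s k} = {} \<longrightarrow>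
         (\<exists>v'\<in>verts n w b F (d - k) \<inter> WW n w b F ((c - S) \<union> T). time n w b F (d - k) (a k) c < a k \<bullet> v')"
        using core[OF affine_flat[of a s k, folded F_def] sk[OF kd, folded F_def] mn s' sw(1)[OF True, folded F_def] cL dis]
        by blast
      define Q where "Q = (\<lambda>T. (c - S) \<union> T) ` Pow S"
      have QD: "Q \<subseteq> D"
      proof
        fix c' assume "c' \<in> Q"
        then obtain T where T: "T \<subseteq> S" "c' = (c - S) \<union> T" unfolding Q_def by auto
        have c'L: "c' \<in> Cl n w b F" using p1 T by blast
        then have c'C: "c' \<in> C" using LC[of k] unfolding F_def L_def by auto
        have "c' \<notin> set (take t vs)"
        proof
          assume "c' \<in> set (take t vs)"
          from in_take_nth[OF this] obtain i where i: "i < t" "vs ! i = c'" by blast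
          have "i < length vs" using i(1) tl by simp
          then have "vs ! i \<noteq> vs ! t" using nth_eq_iff_index_eq[OF dist _ tl] i(1) by simp
          then have "c' \<noteq> c" using i(2) unfolding c_def by simp
          from ord[OF i(1) tl] obtain k1 t1 k2 t2 where
            pk1: "peeled_at n d w b a s k1 t1 c'" and pk2: "peeled_at n d w b a s k2 t2 c"
            and o: "k1 < k2 \<or> (k1 = k2 \<and> t1 \<le> t2)" unfolding c_def i(2)[symmetric] by blast
          have k2: "k2 = k" unfolding k_def using peeled_lev[OF pk2] by simp
          have k1: "k1 = lev c'" using peeled_lev[OF pk1] .
          have "c' \<in> L k" using c'L unfolding F_def L_def by simp
          then have "k \<le> k1" using lev_iff[OF c'C kd] k1 by simp
          then have kk: "k1 = k" "t1 \<le> t2" using o k2 by auto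
          have t2: "t2 = time n w b F (d - k) (a k) c" using peeled_info[OF pk2] k2 True unfolding F_def by auto
          have i1: "RR n w b F c' \<inter> {x. a k \<bullet> x = s k} = {}" "t1 = time n w b F (d - k) (a k) c'"
            using peeled_info[OF pk1] kk True unfolding F_def by auto
          obtain v' where v': "v' \<in> verts n w b F (d - k) \<inter> WW n w b F c'" "time n w b F (d - k) (a k) c < a k \<bullet> v'"
            using p2 T \<open>c' \<noteq> c\<close> i1(1) by blast
          have "a k \<bullet> v' \<le> time n w b F (d - k) (a k) c'"
            unfolding time_def using v'(1) finite_verts[OF sk[OF kd, folded F_def]] by (intro Max_ge) auto
          then show False using v'(2) i1(2) t2 kk(2) by simp
        qed
        then show "c' \<in> D" unfolding D_def using c'C by simp
      qed
      have "is_cube n D Q (d - k)" unfolding is_cube_def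
        by (rule exI[of _ S], rule exI[of _ "c - S"]) (use S QD Csub[OF cC] Q_def in auto)
      moreover have "c \<in> Q" unfolding Q_def by (rule image_eqI[of _ _ "c \<inter> S"]) auto
      ultimately show ?thesis by blast
    qed
    have "max_cube_dim n D c = d - k" unfolding max_cube_dim_def
    proof (rule Max_eqI)
      show "finite {k'. \<exists>Q. is_cube n D Q k' \<and> c \<in> Q}"
        by (rule finite_subset[of _ "{..d - k}"]) (use ub in auto)
      show "k' \<le> d - k" if "k' \<in> {k'. \<exists>Q. is_cube n D Q k' \<and> c \<in> Q}" for k' using that ub by auto
      show "d - k \<in> {k'. \<exists>Q. is_cube n D Q k' \<and> c \<in> Q}" using lb by auto
    qed
    then show ?thesis unfolding D_def c_def k_def .
  qed
  have conj2: "\<forall>i j. i \<le> j \<and> j < length vs \<longrightarrow>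
          max_cube_dim n (C - set (take j vs)) (vs ! j) \<le> max_cube_dim n (C - set (take i vs)) (vs ! i)"
  proof (intro allI impI)
    fix i j assume ij: "i \<le> j \<and> j < length vs"
    then show "max_cube_dim n (C - set (take j vs)) (vs ! j) \<le> max_cube_dim n (C - set (take i vs)) (vs ! i)"
      using cube_dim[of i] cube_dim[of j] sorted[of i j] by simp
  qed
  have conj3: "\<forall>k\<le>d. \<forall>t. (\<Sum>j<k. n choose (d - j)) \<le> t \<and> t < (\<Sum>j\<le>k. n choose (d - j)) \<longrightarrow>
          t < length vs \<and> max_cube_dim n (C - set (take t vs)) (vs ! t) = d - k"
  proof (intro allI impI)
    fix k t assume kd: "k \<le> d" and tt: "(\<Sum>j<k. n choose (d - j)) \<le> t \<and> t < (\<Sum>j\<le>k. n choose (d - j))"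
    have t1: "P k \<le> t" "t < P (Suc k)" using tt unfolding P_def by (auto simp: lessThan_Suc_atMost)
    have "P (Suc k) \<le> P (Suc d)" unfolding P_def by (rule sum_mono2) (use kd in auto)
    then have tl: "t < length vs" using t1 lenvs Ptop by simp
    have "lev (vs ! t) < Suc k" using prefix[of "Suc k" t] kd tl t1 by simp
    moreover have "\<not> lev (vs ! t) < k" using prefix[of k t] kd tl t1 by simp
    ultimately have "lev (vs ! t) = k" by simp
    then show "t < length vs \<and> max_cube_dim n (C - set (take t vs)) (vs ! t) = d - k" using tl cube_dim[OF tl] by simp
  qed
  show ?thesis using conj1 conj2 conj3 unfolding C_def by blast
qed


end
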